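(* Let $\gamma>0$ and let $\tilde K_{12}$ be the kernel of the Fourier multiplier $-\partial_{12}\Delta^{-1}\ln^{-\gamma}(e+|\nabla|)$ (i.e. the operator with symbol $-\frac{k_1k_2}{|k|^2}\ln^{-\gamma}(e+|k|)$). Then there is a constant $C>0$ depending only on $\gamma$ such that for all $x=(x_1,x_2)\in\mathbb{R}^2$ with $x_1>0$, $x_2>0$, $$\tilde K_{12}(x_1,x_2)\ge \frac{C x_1x_2}{|x|^4}\ln^{-\gamma}\Big(e+\frac1{|x|}\Big)e^{-|x|^2}.$$ *)

theory Defs
  imports "HOL-Analysis.Analysis"
begin

text \<open>Symbol of the Fourier multiplier  - d_12 Delta^(-1) ln^(-gamma)(e+|nabla|):
  m(k) = - k1 k2 / |k|^2 * ln(e+|k|)^(-gamma)   (value 0 at k = 0, a null set).\<close>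
definition symb :: "real \<Rightarrow> real \<times> real \<Rightarrow> real" where
  "symb \<gamma> k = - (fst k * snd k) / (norm k)\<^sup>2 * (ln (exp 1 + norm k)) powr (- \<gamma>)"

definition kernel_eps :: "real \<Rightarrow> real \<Rightarrow> real \<times> real \<Rightarrow> complex" where
  "kernel_eps \<gamma> \<epsilon> x =
     complex_of_real (1 / (2 * pi)\<^sup>2) *
     integral\<^sup>L (lborel :: (real \<times> real) measure)
       (\<lambda>k. complex_of_real (symb \<gamma> k * exp (- \<epsilon> * (norm k)\<^sup>2)) * cis (inner k x))"

text \<open>The (real-valued) kernel of the multiplier, for x \<noteq> 0:
  limit of the regularised inverse Fourier transforms as eps \<rightarrow> 0+.\<close>
definition tildeK :: "real \<Rightarrow> real \<times> real \<Rightarrow> real" where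
  "tildeK \<gamma> x = Re (Lim (at_right 0) (\<lambda>\<epsilon>. kernel_eps \<gamma> \<epsilon> x))"

end

theory Submission
  imports Defs "HOL-Probability.Probability" "HOL-Real_Asymp.Real_Asymp"
begin

lemma gauss_integrable:
  assumes a: "a > 0"
  shows "integrable lborel (\<lambda>k::real. exp (- a * k\<^sup>2) * k ^ n)"
proof -
  define c where "c = sqrt (2 * a)"
  have c: "c > 0" using a by (simp add: c_def)
  have c2: "c\<^sup>2 = 2 * a" using a by (simp add: c_def)
  have "integrable lborel (\<lambda>y. std_normal_density y * y ^ n)"
    by (rule integrable_std_normal_moment)
  then have "integrable lborel (\<lambda>y. (sqrt (2*pi) / c ^ n) *\<^sub>R (std_normal_density y * y ^ n))"
    by (intro integrable_scaleR_right)
  then have "integrable lborel (\<lambda>k. (\<lambda>y. (sqrt (2*pi) / c ^ n) *\<^sub>R (std_normal_density y * y ^ n)) (0 + c * k))"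
    using lborel_integrable_real_affine[of _ c 0] c by auto
  moreover have "(\<lambda>k. (\<lambda>y. (sqrt (2*pi) / c ^ n) *\<^sub>R (std_normal_density y * y ^ n)) (0 + c * k))
      = (\<lambda>k::real. exp (- a * k\<^sup>2) * k ^ n)"
    using c c2 by (auto simp: std_normal_density_def power_mult_distrib field_simps fun_eq_iff)
  ultimately show ?thesis by simp
qed

lemma gauss_char:
  assumes a: "a > 0"
  shows "(\<integral>k. complex_of_real (exp (- a * k\<^sup>2)) * cis (k * x) \<partial>lborel)
         = complex_of_real (sqrt (pi / a) * exp (- x\<^sup>2 / (4 * a)))"
proof -
  define c where "c = sqrt (2 * a)"
  have c: "c > 0" using a by (simp add: c_def)
  have c2: "c\<^sup>2 = 2 * a" using a by (simp add: c_def)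
  define t where "t = x / c"
  have "char std_normal_distribution t = complex_of_real (exp (- t\<^sup>2 / 2))"
    by (simp add: char_std_normal_distribution)
  also have "char std_normal_distribution t = (\<integral>y. std_normal_density y *\<^sub>R iexp (t * y) \<partial>lborel)"
    unfolding char_def
    by (subst integral_density) (auto simp: normal_density_nonneg)
  also have "\<dots> = c *\<^sub>R (\<integral>k. std_normal_density (0 + c * k) *\<^sub>R iexp (t * (0 + c * k)) \<partial>lborel)"
    using lborel_integral_real_affine[of c "\<lambda>y. std_normal_density y *\<^sub>R iexp (t * y)" 0] c by simp
  also have "(\<lambda>k. std_normal_density (0 + c * k) *\<^sub>R iexp (t * (0 + c * k)))
      = (\<lambda>k. complex_of_real (1 / sqrt (2 * pi)) * (complex_of_real (exp (- a * k\<^sup>2)) * cis (k * x)))"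
    using c c2 by (auto simp: fun_eq_iff std_normal_density_def t_def cis_conv_exp scaleR_conv_of_real
        power_mult_distrib mult_ac)
  finally have "c *\<^sub>R (complex_of_real (1 / sqrt (2 * pi)) * (\<integral>k. complex_of_real (exp (- a * k\<^sup>2)) * cis (k * x) \<partial>lborel))
     = complex_of_real (exp (- t\<^sup>2 / 2))"
    by simp
  then have "(\<integral>k. complex_of_real (exp (- a * k\<^sup>2)) * cis (k * x) \<partial>lborel)
     = complex_of_real (exp (- t\<^sup>2 / 2) * sqrt (2 * pi) / c)"
    using c by (auto simp: scaleR_conv_of_real field_simps)
  also have "exp (- t\<^sup>2 / 2) * sqrt (2 * pi) / c = sqrt (pi / a) * exp (- x\<^sup>2 / (4 * a))"
  proof -
    have "- t\<^sup>2 / 2 = - x\<^sup>2 / (4 * a)" using c2 c a by (simp add: t_def power_divide)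
    moreover have "sqrt (2 * pi) / c = sqrt (pi / a)" using a by (simp add: c_def real_sqrt_divide[symmetric])
    ultimately show ?thesis
      by (subst times_divide_eq_right[symmetric]) (simp only: mult.commute)
  qed
  finally show ?thesis .
qed

lemma measurable_cis[measurable]: "cis \<in> borel_measurable borel"
  by (rule borel_measurable_continuous_onI) (simp add: cis_conv_exp continuous_intros)

lemma integrable_cis_mult:
  fixes g :: "real \<Rightarrow> real"
  assumes "integrable lborel g"
  shows "integrable lborel (\<lambda>k. complex_of_real (g k) * cis (k * x))"
proof (rule Bochner_Integration.integrable_bound[of _ "\<lambda>k. complex_of_real (g k)"])
  show "integrable lborel (\<lambda>k. complex_of_real (g k))" using assms by simp
  show "(\<lambda>k. complex_of_real (g k) * cis (k * x)) \<in> borel_measurable lborel"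
    using borel_measurable_integrable[OF assms] by measurable
  show "AE k in lborel. norm (complex_of_real (g k) * cis (k * x)) \<le> norm (complex_of_real (g k))"
    by (simp add: norm_mult)
qed

lemma LBINT_whole:
  fixes f :: "real \<Rightarrow> 'a::{banach, second_countable_topology}"
  shows "interval_lebesgue_integral lborel (-\<infinity>) \<infinity> f = integral\<^sup>L lborel f"
  by (simp add: interval_lebesgue_integral_le_eq einterval_eq_UNIV set_lebesgue_integral_def)

lemma gauss_char1:
  assumes a: "a > 0"
  shows "(\<integral>k. complex_of_real (k * exp (- a * k\<^sup>2)) * cis (k * x) \<partial>lborel)
         = \<i> * complex_of_real (x / (2 * a) * sqrt (pi / a) * exp (- x\<^sup>2 / (4 * a)))"
proof -
  define f where "f = (\<lambda>k. complex_of_real (k * exp (- a * k\<^sup>2)) * cis (k * x)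
       - complex_of_real (x / (2 * a)) * \<i> * (complex_of_real (exp (- a * k\<^sup>2)) * cis (k * x)))"
  define F where "F = (\<lambda>k. complex_of_real (- exp (- a * k\<^sup>2) / (2 * a)) * cis (k * x))"
  have i0: "integrable lborel (\<lambda>k. complex_of_real (exp (- a * k\<^sup>2)) * cis (k * x))"
    using integrable_cis_mult[OF gauss_integrable[OF a, of 0]] by simp
  have i1: "integrable lborel (\<lambda>k. complex_of_real (k * exp (- a * k\<^sup>2)) * cis (k * x))"
    by (rule integrable_cis_mult) (use gauss_integrable[OF a, of 1] in \<open>simp add: mult.commute\<close>)
  have fi: "integrable lborel f" unfolding f_def using i0 i1 by (intro Bochner_Integration.integrable_diff integrable_mult_right)
  have "interval_lebesgue_integral lborel (-\<infinity>) \<infinity> f = 0 - 0"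
  proof (rule interval_integral_FTC_integrable)
    show "(F has_vector_derivative f k) (at k)" for k
    proof -
      have "((\<lambda>z. - exp (- of_real a * z\<^sup>2) / (2 * of_real a) * exp (\<i> * of_real x * z))
         has_field_derivative f k) (at (of_real k))"
        unfolding f_def using a
        by (auto intro!: derivative_eq_intros simp: cis_conv_exp exp_of_real[symmetric])
           (auto simp: field_simps power2_eq_square)
      from has_vector_derivative_real_field[OF this] show ?thesis
        unfolding F_def by (simp add: cis_conv_exp exp_of_real[symmetric] mult_ac)
    qed
    show "isCont f k" for k unfolding f_def cis_conv_exp by (intro continuous_intros)
    show "set_integrable lborel (einterval (-\<infinity>) \<infinity>) f"
      using fi by (simp add: einterval_eq_UNIV set_integrable_def)
    have "(F \<longlongrightarrow> 0) at_top \<and> (F \<longlongrightarrow> 0) at_bot"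
    proof -
      have l1: "((\<lambda>k. exp (- a * k\<^sup>2) / (2 * a)) \<longlongrightarrow> 0) at_top" using a by real_asymp
      have l2: "((\<lambda>k. exp (- a * k\<^sup>2) / (2 * a)) \<longlongrightarrow> 0) at_bot" using a by real_asymp
      have eq: "(\<lambda>k. norm (F k)) = (\<lambda>k. exp (- a * k\<^sup>2) / (2 * a))"
      proof
        fix k
        have "norm (F k) = norm (complex_of_real (- exp (- a * k\<^sup>2) / (2 * a))) * norm (cis (k * x))"
          unfolding F_def by (rule norm_mult)
        also have "\<dots> = \<bar>- exp (- a * k\<^sup>2) / (2 * a)\<bar>" by (simp only: norm_of_real norm_cis mult_1_right)
        also have "\<dots> = exp (- a * k\<^sup>2) / (2 * a)" using a by simp
        finally show "norm (F k) = exp (- a * k\<^sup>2) / (2 * a)" .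
      qed
      have "(F \<longlongrightarrow> 0) at_top" by (rule tendsto_norm_zero_cancel) (unfold eq, rule l1)
      moreover have "(F \<longlongrightarrow> 0) at_bot" by (rule tendsto_norm_zero_cancel) (unfold eq, rule l2)
      ultimately show ?thesis by blast
    qed
    then show "((F \<circ> real_of_ereal) \<longlongrightarrow> 0) (at_right (-\<infinity>))"
         "((F \<circ> real_of_ereal) \<longlongrightarrow> 0) (at_left \<infinity>)"
      by (simp_all add: ereal_tendsto_simps1)
  qed simp
  then have "integral\<^sup>L lborel f = 0" by (simp add: LBINT_whole)
  then have "(\<integral>k. complex_of_real (k * exp (- a * k\<^sup>2)) * cis (k * x) \<partial>lborel)
     = complex_of_real (x / (2 * a)) * \<i> * (\<integral>k. complex_of_real (exp (- a * k\<^sup>2)) * cis (k * x) \<partial>lborel)"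
  proof -
    have "integral\<^sup>L lborel f = (\<integral>k. complex_of_real (k * exp (- a * k\<^sup>2)) * cis (k * x) \<partial>lborel)
       - (\<integral>k. complex_of_real (x / (2 * a)) * \<i> * (complex_of_real (exp (- a * k\<^sup>2)) * cis (k * x)) \<partial>lborel)"
      unfolding f_def by (rule Bochner_Integration.integral_diff[OF i1 integrable_mult_right[OF i0]])
    also have "(\<integral>k. complex_of_real (x / (2 * a)) * \<i> * (complex_of_real (exp (- a * k\<^sup>2)) * cis (k * x)) \<partial>lborel)
      = complex_of_real (x / (2 * a)) * \<i> * (\<integral>k. complex_of_real (exp (- a * k\<^sup>2)) * cis (k * x) \<partial>lborel)"
      by (rule integral_mult_right_zero)
    finally show ?thesis using \<open>integral\<^sup>L lborel f = 0\<close> by simp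
  qed
  also have "\<dots> = \<i> * complex_of_real (x / (2 * a) * sqrt (pi / a) * exp (- x\<^sup>2 / (4 * a)))"
    using gauss_char[OF a, of x] by (simp add: mult_ac)
  finally show ?thesis .
qed

lemma integral_prod_mult_complex:
  fixes f g :: "real \<Rightarrow> complex"
  assumes f: "integrable lborel f" and g: "integrable lborel g"
  shows "integrable (lborel \<Otimes>\<^sub>M lborel) (\<lambda>(x,y). f x * g y)"
    and "(\<integral>p. (case p of (x,y) \<Rightarrow> f x * g y) \<partial>(lborel \<Otimes>\<^sub>M lborel)) = integral\<^sup>L lborel f * integral\<^sup>L lborel g"
proof -
  have [measurable]: "f \<in> borel_measurable borel" "g \<in> borel_measurable borel"
    using borel_measurable_integrable[OF f] borel_measurable_integrable[OF g] by auto
  show I: "integrable (lborel \<Otimes>\<^sub>M lborel) (\<lambda>(x,y). f x * g y)"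
  proof (rule lborel_pair.Fubini_integrable)
    show "(\<lambda>(x,y). f x * g y) \<in> borel_measurable (lborel \<Otimes>\<^sub>M lborel)" by measurable
    have "integrable lborel (\<lambda>x. norm (f x) * (\<integral>y. norm (g y) \<partial>lborel))"
      using f by (intro integrable_mult_left) auto
    then show "integrable lborel (\<lambda>x. \<integral>y. norm (case (x, y) of (x, y) \<Rightarrow> f x * g y) \<partial>lborel)"
      by (simp add: norm_mult)
    show "AE x in lborel. integrable lborel (\<lambda>y. case (x, y) of (x, y) \<Rightarrow> f x * g y)"
      using g by (auto intro!: integrable_mult_right)
  qed
  have "(\<integral>p. (case p of (x,y) \<Rightarrow> f x * g y) \<partial>(lborel \<Otimes>\<^sub>M lborel)) = (\<integral>x. (\<integral>y. f x * g y \<partial>lborel) \<partial>lborel)"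
    using lborel_pair.integral_fst'[OF I] by simp
  also have "\<dots> = (\<integral>x. f x * integral\<^sup>L lborel g \<partial>lborel)" by simp
  also have "\<dots> = integral\<^sup>L lborel f * integral\<^sup>L lborel g" by simp
  finally show "(\<integral>p. (case p of (x,y) \<Rightarrow> f x * g y) \<partial>(lborel \<Otimes>\<^sub>M lborel)) = integral\<^sup>L lborel f * integral\<^sup>L lborel g" .
qed

lemma gauss2d:
  fixes x :: "real \<times> real"
  assumes a: "a > 0"
  shows "(\<integral>k. complex_of_real (- (fst k * snd k) * exp (- a * (norm k)\<^sup>2)) * cis (inner k x) \<partial>(lborel::(real\<times>real) measure))
     = complex_of_real (pi * fst x * snd x / (4 * a ^ 3) * exp (- (norm x)\<^sup>2 / (4 * a)))"
proof -
  obtain x1 x2 where x: "x = (x1, x2)" by (cases x)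
  define h where "h = (\<lambda>(y::real) (z::real). complex_of_real (z * exp (- a * z\<^sup>2)) * cis (z * y))"
  have hi: "integrable lborel (h y)" for y
    unfolding h_def
    by (rule integrable_cis_mult) (use gauss_integrable[OF a, of 1] in \<open>simp add: mult.commute\<close>)
  have eq: "(\<lambda>k. complex_of_real (- (fst k * snd k) * exp (- a * (norm k)\<^sup>2)) * cis (inner k x))
       = (\<lambda>k. - (case k of (k1, k2) \<Rightarrow> h x1 k1 * h x2 k2))"
  proof
    fix k :: "real \<times> real"
    obtain k1 k2 where k: "k = (k1, k2)" by (cases k)
    have "(norm k)\<^sup>2 = k1\<^sup>2 + k2\<^sup>2" by (simp add: k norm_Pair)
    then have "exp (- a * (norm k)\<^sup>2) = exp (- a * k1\<^sup>2) * exp (- a * k2\<^sup>2)"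
      by (simp add: exp_add[symmetric] algebra_simps)
    moreover have "cis (inner k x) = cis (k1 * x1) * cis (k2 * x2)" by (simp add: k x cis_mult)
    ultimately show "complex_of_real (- (fst k * snd k) * exp (- a * (norm k)\<^sup>2)) * cis (inner k x)
       = - (case k of (k1, k2) \<Rightarrow> h x1 k1 * h x2 k2)"
      by (simp add: k h_def mult_ac)
  qed
  have "(\<integral>k. complex_of_real (- (fst k * snd k) * exp (- a * (norm k)\<^sup>2)) * cis (inner k x) \<partial>(lborel::(real\<times>real) measure))
     = (\<integral>k. - (case k of (k1, k2) \<Rightarrow> h x1 k1 * h x2 k2) \<partial>(lborel \<Otimes>\<^sub>M lborel))"
    by (simp only: eq lborel_prod)
  also have "\<dots> = - (integral\<^sup>L lborel (h x1) * integral\<^sup>L lborel (h x2))"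
    using integral_prod_mult_complex(2)[OF hi hi] by (simp add: integral_minus)
  also have "\<dots> = complex_of_real (pi * fst x * snd x / (4 * a ^ 3) * exp (- (norm x)\<^sup>2 / (4 * a)))"
  proof -
    have hv: "integral\<^sup>L lborel (h y) = \<i> * complex_of_real (y / (2 * a) * sqrt (pi / a) * exp (- y\<^sup>2 / (4 * a)))" for y
      unfolding h_def using gauss_char1[OF a, of y] by simp
    have "sqrt (pi / a) * sqrt (pi / a) = pi / a" using a by simp
    moreover have "exp (- x1\<^sup>2 / (4 * a)) * exp (- x2\<^sup>2 / (4 * a)) = exp (- (norm x)\<^sup>2 / (4 * a))"
      by (simp add: x norm_Pair exp_add[symmetric] add_divide_distrib diff_divide_distrib)
    ultimately have r: "(x1 / (2 * a) * sqrt (pi / a) * exp (- x1\<^sup>2 / (4 * a))) * (x2 / (2 * a) * sqrt (pi / a) * exp (- x2\<^sup>2 / (4 * a)))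
        = pi * fst x * snd x / (4 * a ^ 3) * exp (- (norm x)\<^sup>2 / (4 * a))"
      using a by (simp add: x field_simps power3_eq_cube)
    have ii: "- ((\<i> * complex_of_real A) * (\<i> * complex_of_real B)) = complex_of_real (A * B)" for A B
      by (simp add: algebra_simps)
    show ?thesis unfolding hv ii r ..
  qed
  finally show ?thesis .
qed



lemma SUP_indicator_ennreal:
  assumes "incseq S"
  shows "(SUP n. indicator (S n) w :: ennreal) = indicator (\<Union>n. S n) w"
proof (cases "\<exists>n. w \<in> S n")
  case True
  then obtain n where n: "w \<in> S n" by blast
  have "(SUP n. indicator (S n) w :: ennreal) = 1"
  proof (rule antisym)
    show "(SUP n. indicator (S n) w :: ennreal) \<le> 1" by (rule SUP_least) (simp add: indicator_def)
    have "(1::ennreal) = indicator (S n) w" using n by simp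
    also have "\<dots> \<le> (SUP n. indicator (S n) w)" by (rule SUP_upper) simp
    finally show "1 \<le> (SUP n. indicator (S n) w :: ennreal)" .
  qed
  then show ?thesis using True by simp
next
  case False
  then show ?thesis by simp
qed

lemma ennreal_mult_ind: "ennreal (a * indicator S x) = ennreal a * indicator S x"
  by (simp split: split_indicator)

lemma nn_subst_core:
  fixes g g' f :: "real \<Rightarrow> real"
  assumes deriv: "\<And>y. y > 0 \<Longrightarrow> (g has_real_derivative g' y) (at y)"
    and cont: "continuous_on {0<..} g'"
    and nonneg: "\<And>y. y > 0 \<Longrightarrow> g' y \<ge> 0"
    and f[measurable]: "f \<in> borel_measurable borel"
  shows "(\<integral>\<^sup>+w. ennreal (f w) * indicator (\<Union>n. {g (1 / Suc n)..g (Suc n)}) w \<partial>lborel)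
       = (\<integral>\<^sup>+y. ennreal (f (g y) * g' y) * indicator {0<..} y \<partial>lborel)"
proof -
  define l where "l n = 1 / real (Suc n)" for n
  define u where "u n = real (Suc n)" for n
  have lpos: "l n > 0" for n by (simp add: l_def)
  have lu: "l n \<le> u n" for n
  proof -
    have "l n \<le> 1" by (simp add: l_def)
    also have "1 \<le> u n" by (simp add: u_def)
    finally show ?thesis .
  qed
  have ldec: "l (Suc n) \<le> l n" for n by (simp add: l_def frac_le)
  have uinc: "u n \<le> u (Suc n)" for n by (simp add: u_def)
  have mono: "g x \<le> g y" if "0 < x" "x \<le> y" for x y
    using deriv_nonneg_imp_mono[of x y g g'] that deriv nonneg by force
  have sub: "(\<integral>\<^sup>+x. ennreal (f x * indicator {g (l n)..g (u n)} x) \<partial>lborel)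
      = (\<integral>\<^sup>+x. ennreal (f (g x) * g' x * indicator {l n..u n} x) \<partial>lborel)" for n
  proof (rule nn_integral_substitution)
    show "set_borel_measurable borel {g (l n)..g (u n)} f" by (simp add: set_borel_measurable_def)
    show "(g has_real_derivative g' x) (at x)" if "x \<in> {l n..u n}" for x
      using deriv[of x] that lpos[of n] by auto
    show "continuous_on {l n..u n} g'" using cont by (rule continuous_on_subset) (use lpos[of n] in auto)
    show "0 \<le> g' x" if "x \<in> {l n..u n}" for x using nonneg[of x] that lpos[of n] by auto
  qed (rule lu)
  have inc1: "incseq (\<lambda>n. {g (l n)..g (u n)})"
  proof (rule incseq_SucI)
    fix n
    have "g (l (Suc n)) \<le> g (l n)" by (rule mono[OF lpos ldec])
    moreover have "g (u n) \<le> g (u (Suc n))" by (rule mono[OF _ uinc]) (simp add: u_def)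
    ultimately show "{g (l n)..g (u n)} \<subseteq> {g (l (Suc n))..g (u (Suc n))}" by auto
  qed
  have inc2: "incseq (\<lambda>n. {l n..u n})"
    by (rule incseq_SucI) (use ldec uinc in \<open>auto intro: order_trans\<close>)
  have U2: "(\<Union>n. {l n..u n}) = {0<..}"
  proof (intro equalityI subsetI)
    fix x assume "x \<in> (\<Union>n. {l n..u n})" then show "x \<in> {0<..}" using lpos by (auto intro: less_le_trans)
  next
    fix x :: real assume x: "x \<in> {0<..}"
    obtain n1 :: nat where n1: "x < n1" using reals_Archimedean2 by blast
    obtain n2 :: nat where n2: "1 / x < n2" using reals_Archimedean2 by blast
    define n where "n = max n1 n2"
    have "u n \<ge> x" using n1 by (simp add: u_def n_def)
    moreover have "l n \<le> x"
    proof -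
      have "1 / x < real (Suc n)" using n2 by (simp add: n_def)
      then show ?thesis using x by (simp add: l_def field_simps)
    qed
    ultimately show "x \<in> (\<Union>n. {l n..u n})" by auto
  qed
  have "(\<integral>\<^sup>+w. ennreal (f w) * indicator (\<Union>n. {g (l n)..g (u n)}) w \<partial>lborel)
      = (\<integral>\<^sup>+w. (SUP n. ennreal (f w * indicator {g (l n)..g (u n)} w)) \<partial>lborel)"
  proof (rule nn_integral_cong)
    fix w
    have "(SUP n. ennreal (f w * indicator {g (l n)..g (u n)} w)) = (SUP n. ennreal (f w) * indicator {g (l n)..g (u n)} w)"
      by (simp only: ennreal_mult_ind)
    also have "\<dots> = ennreal (f w) * (SUP n. indicator {g (l n)..g (u n)} w)"
      by (simp add: SUP_mult_left_ennreal)
    also have "\<dots> = ennreal (f w) * indicator (\<Union>n. {g (l n)..g (u n)}) w"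
      by (simp add: SUP_indicator_ennreal[OF inc1])
    finally show "ennreal (f w) * indicator (\<Union>n. {g (l n)..g (u n)}) w = (SUP n. ennreal (f w * indicator {g (l n)..g (u n)} w))" ..
  qed
  also have "\<dots> = (SUP n. (\<integral>\<^sup>+w. ennreal (f w * indicator {g (l n)..g (u n)} w) \<partial>lborel))"
  proof (rule nn_integral_monotone_convergence_SUP)
    show "incseq (\<lambda>n w. ennreal (f w * indicator {g (l n)..g (u n)} w))"
      unfolding incseq_def le_fun_def
    proof (intro allI impI)
      fix m n :: nat and w assume "m \<le> n"
      then have "{g (l m)..g (u m)} \<subseteq> {g (l n)..g (u n)}" using inc1 by (rule incseqD[rotated])
      then show "ennreal (f w * indicator {g (l m)..g (u m)} w) \<le> ennreal (f w * indicator {g (l n)..g (u n)} w)"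
        by (auto simp: ennreal_mult_ind split: split_indicator)
    qed
  qed simp
  also have "\<dots> = (SUP n. (\<integral>\<^sup>+x. ennreal (f (g x) * g' x * indicator {l n..u n} x) \<partial>lborel))"
    by (simp add: sub)
  also have "\<dots> = (\<integral>\<^sup>+x. (SUP n. ennreal (f (g x) * g' x * indicator {l n..u n} x)) \<partial>lborel)"
  proof (rule nn_integral_monotone_convergence_SUP[symmetric])
    show "incseq (\<lambda>n x. ennreal (f (g x) * g' x * indicator {l n..u n} x))"
      unfolding incseq_def le_fun_def
    proof (intro allI impI)
      fix m n :: nat and w assume "m \<le> n"
      then have "{l m..u m} \<subseteq> {l n..u n}" using inc2 by (rule incseqD[rotated])
      then show "ennreal (f (g w) * g' w * indicator {l m..u m} w) \<le> ennreal (f (g w) * g' w * indicator {l n..u n} w)"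
        by (auto simp: ennreal_mult_ind split: split_indicator)
    qed
    show "(\<lambda>x. ennreal (f (g x) * g' x * indicator {l n..u n} x)) \<in> borel_measurable lborel" for n
    proof -
      have cg: "continuous_on {l n..u n} g"
        by (rule DERIV_continuous_on[of _ _ g']) (use deriv lpos[of n] in \<open>auto intro: less_le_trans has_field_derivative_at_within\<close>)
      have cg': "continuous_on {l n..u n} g'"
        using cont by (rule continuous_on_subset) (use lpos[of n] in auto)
      have [measurable]: "(\<lambda>x. if x \<in> {l n..u n} then g x else 0) \<in> borel_measurable borel"
        by (rule borel_measurable_continuous_on_if) (auto intro: cg continuous_on_const)
      have [measurable]: "(\<lambda>x. if x \<in> {l n..u n} then g' x else 0) \<in> borel_measurable borel"
        by (rule borel_measurable_continuous_on_if) (auto intro: cg' continuous_on_const)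
      have "(\<lambda>x. ennreal (f (if x \<in> {l n..u n} then g x else 0) * (if x \<in> {l n..u n} then g' x else 0) * indicator {l n..u n} x)) \<in> borel_measurable lborel"
        by measurable
      also have "(\<lambda>x. ennreal (f (if x \<in> {l n..u n} then g x else 0) * (if x \<in> {l n..u n} then g' x else 0) * indicator {l n..u n} x))
         = (\<lambda>x. ennreal (f (g x) * g' x * indicator {l n..u n} x))"
        by (auto simp: fun_eq_iff indicator_def)
      finally show ?thesis .
    qed
  qed
  also have "\<dots> = (\<integral>\<^sup>+y. ennreal (f (g y) * g' y) * indicator {0<..} y \<partial>lborel)"
  proof (rule nn_integral_cong)
    fix x
    have "(SUP n. ennreal (f (g x) * g' x * indicator {l n..u n} x)) = (SUP n. ennreal (f (g x) * g' x) * indicator {l n..u n} x)"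
      by (simp only: ennreal_mult_ind)
    also have "\<dots> = ennreal (f (g x) * g' x) * (SUP n. indicator {l n..u n} x)"
      by (simp add: SUP_mult_left_ennreal)
    also have "\<dots> = ennreal (f (g x) * g' x) * indicator {0<..} x"
      by (simp add: SUP_indicator_ennreal[OF inc2] U2)
    finally show "(SUP n. ennreal (f (g x) * g' x * indicator {l n..u n} x)) = ennreal (f (g x) * g' x) * indicator {0<..} x" .
  qed
  finally show ?thesis by (simp add: l_def u_def)
qed

lemma half_gauss:
  "(\<integral>\<^sup>+x. ennreal (exp (- x\<^sup>2)) * indicator {0<..} x \<partial>lborel) = ennreal (sqrt pi / 2)"
proof -
  have hb: "has_bochner_integral lborel (\<lambda>x. indicator {0..} x *\<^sub>R exp (- x\<^sup>2)) (sqrt pi / 2)"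
    by (rule gaussian_moment_0)
  have "(\<integral>\<^sup>+x. ennreal (indicator {0..} x *\<^sub>R exp (- x\<^sup>2)) \<partial>lborel) = ennreal (integral\<^sup>L lborel (\<lambda>x. indicator {0..} x *\<^sub>R exp (- x\<^sup>2)))"
    by (rule nn_integral_eq_integral) (use has_bochner_integral_iff[THEN iffD1, OF hb] in auto)
  also have "\<dots> = ennreal (sqrt pi / 2)" using has_bochner_integral_iff[THEN iffD1, OF hb] by simp
  finally have 1: "(\<integral>\<^sup>+x. ennreal (indicator {0..} x *\<^sub>R exp (- x\<^sup>2)) \<partial>lborel) = ennreal (sqrt pi / 2)" .
  have "(\<integral>\<^sup>+x. ennreal (exp (- x\<^sup>2)) * indicator {0<..} x \<partial>lborel) = (\<integral>\<^sup>+x. ennreal (indicator {0..} x *\<^sub>R exp (- x\<^sup>2)) \<partial>lborel)"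
    by (rule nn_integral_cong_AE) (use AE_lborel_singleton[of 0] in \<open>eventually_elim, auto split: split_indicator\<close>)
  with 1 show ?thesis by simp
qed

lemma full_gauss:
  "(\<integral>\<^sup>+x. ennreal (exp (- x\<^sup>2)) \<partial>lborel) = ennreal (sqrt pi)"
proof -
  have "(\<integral>\<^sup>+x. ennreal (exp (- x\<^sup>2)) \<partial>lborel)
     = (\<integral>\<^sup>+x. ennreal (exp (- x\<^sup>2)) * indicator {0<..} x + ennreal (exp (- x\<^sup>2)) * indicator {..<0} x \<partial>lborel)"
    by (rule nn_integral_cong_AE) (use AE_lborel_singleton[of 0] in \<open>eventually_elim, auto split: split_indicator\<close>)
  also have "\<dots> = (\<integral>\<^sup>+x. ennreal (exp (- x\<^sup>2)) * indicator {0<..} x \<partial>lborel) + (\<integral>\<^sup>+x. ennreal (exp (- x\<^sup>2)) * indicator {..<0} x \<partial>lborel)"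
    by (rule nn_integral_add) auto
  also have "(\<integral>\<^sup>+x. ennreal (exp (- x\<^sup>2)) * indicator {..<0} x \<partial>lborel)
     = ennreal \<bar>-1\<bar> * (\<integral>\<^sup>+x. ennreal (exp (- (0 + (-1) * x)\<^sup>2)) * indicator {..<0} (0 + (-1) * x) \<partial>lborel)"
    by (rule nn_integral_real_affine) auto
  also have "\<dots> = (\<integral>\<^sup>+x. ennreal (exp (- x\<^sup>2)) * indicator {0<..} x \<partial>lborel)"
    by (auto intro!: nn_integral_cong split: split_indicator)
  finally show ?thesis unfolding half_gauss by (simp flip: ennreal_plus)
qed

lemma CS_integral:
  fixes c :: real
  assumes c: "c > 0"
  shows "(\<integral>\<^sup>+y. ennreal (exp (- (y - c / y)\<^sup>2)) * indicator {0<..} y \<partial>lborel) = ennreal (sqrt pi / 2)"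
proof -
  define E where "E = (\<integral>\<^sup>+y. ennreal (exp (- (y - c / y)\<^sup>2)) * indicator {0<..} y \<partial>lborel)"
    have T1: "(\<Union>n. {(\<lambda>y. y - c / y) (1 / Suc n)..(\<lambda>y. y - c / y) (Suc n)}) = UNIV"
  proof (intro equalityI subsetI UNIV_I)
    fix w :: real
    obtain n :: nat where n: "\<bar>w\<bar> + c + (1 + \<bar>w\<bar>) / c < n" using reals_Archimedean2 by blast
    have "Suc n - c / Suc n \<ge> w"
    proof -
      have "c / Suc n \<le> c" using c by (simp add: divide_le_eq)
      then show ?thesis using n c by (smt (verit) divide_nonneg_nonneg of_nat_Suc abs_ge_self)
    qed
    moreover have "1 / Suc n - c * Suc n \<le> w"
    proof -
      have "(1 + \<bar>w\<bar>) / c \<le> n" using n c by (smt (verit) divide_nonneg_nonneg abs_ge_zero)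
      then have "1 + \<bar>w\<bar> \<le> c * n" using c by (simp add: divide_le_eq mult.commute)
      moreover have "1 / Suc n \<le> 1" by simp
      ultimately show ?thesis using c by (smt (verit) of_nat_Suc distrib_left mult_nonneg_nonneg abs_ge_self)
    qed
    ultimately show "w \<in> (\<Union>n. {(\<lambda>y. y - c / y) (1 / Suc n)..(\<lambda>y. y - c / y) (Suc n)})"
      by (auto simp: field_simps intro!: exI[of _ n])
  qed
  have s2: "(\<integral>\<^sup>+w. ennreal (exp (- w\<^sup>2)) * indicator (\<Union>n. {(\<lambda>y. y - c / y) (1 / Suc n)..(\<lambda>y. y - c / y) (Suc n)}) w \<partial>lborel)
     = (\<integral>\<^sup>+y. ennreal (exp (- ((\<lambda>y. y - c / y) y)\<^sup>2) * (1 + c / y\<^sup>2)) * indicator {0<..} y \<partial>lborel)"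
  proof (rule nn_subst_core)
    show "((\<lambda>y. y - c / y) has_real_derivative 1 + c / y\<^sup>2) (at y)" if "y > 0" for y
      using that by (auto intro!: derivative_eq_intros simp: power2_eq_square field_simps)
    show "continuous_on {0<..} (\<lambda>y. 1 + c / y\<^sup>2)" by (intro continuous_intros) auto
    show "0 \<le> 1 + c / y\<^sup>2" for y using c by (simp add: add_nonneg_nonneg)
  qed simp
  have A: "ennreal (sqrt pi) = (\<integral>\<^sup>+y. ennreal (exp (- (y - c / y)\<^sup>2) * (1 + c / y\<^sup>2)) * indicator {0<..} y \<partial>lborel)"
    using s2 unfolding T1 by (simp add: full_gauss)
    have T2: "(\<Union>n. {(\<lambda>z. - c / z) (1 / Suc n)..(\<lambda>z. - c / z) (Suc n)}) = {..<0}"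
  proof (intro equalityI subsetI)
    fix w assume "w \<in> (\<Union>n. {(\<lambda>z. - c / z) (1 / Suc n)..(\<lambda>z. - c / z) (Suc n)})"
    then obtain n where "w \<le> - c / Suc n" by auto
    moreover have "- c / Suc n < 0" using c by simp
    ultimately show "w \<in> {..<0}" by simp
  next
    fix w :: real assume w: "w \<in> {..<0}"
    obtain n :: nat where n: "- w / c + c / (- w) < n" using reals_Archimedean2 by blast
    have "- c * Suc n \<le> w"
    proof -
      have h: "(- w) / c \<le> Suc n" using n w c by (smt (verit) divide_pos_pos of_nat_Suc lessThan_iff)
      have "- w \<le> Suc n * c" using c h by (simp only: pos_divide_le_eq)
      then show ?thesis by (simp add: mult.commute)
    qed
    moreover have "w \<le> - c / Suc n"
    proof -
      have h: "c / (- w) \<le> Suc n" using n w c by (smt (verit) divide_pos_pos of_nat_Suc lessThan_iff)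
      have "0 < - w" using w by simp
      then have "c \<le> Suc n * (- w)" using h by (simp only: pos_divide_le_eq)
      then show ?thesis by (simp add: field_simps)
    qed
    ultimately show "w \<in> (\<Union>n. {(\<lambda>z. - c / z) (1 / Suc n)..(\<lambda>z. - c / z) (Suc n)})"
      by (auto simp: field_simps intro!: exI[of _ n])
  qed
  have s1: "(\<integral>\<^sup>+w. ennreal (exp (- (w - c / w)\<^sup>2)) * indicator (\<Union>n. {(\<lambda>z. - c / z) (1 / Suc n)..(\<lambda>z. - c / z) (Suc n)}) w \<partial>lborel)
     = (\<integral>\<^sup>+z. ennreal (exp (- ((\<lambda>z. - c / z) z - c / (\<lambda>z. - c / z) z)\<^sup>2) * (c / z\<^sup>2)) * indicator {0<..} z \<partial>lborel)"
  proof (rule nn_subst_core[where f = "\<lambda>w. exp (- (w - c / w)\<^sup>2)"])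
    show "((\<lambda>z. - c / z) has_real_derivative c / z\<^sup>2) (at z)" if "z > 0" for z
      using that by (auto intro!: derivative_eq_intros simp: power2_eq_square field_simps)
    show "continuous_on {0<..} (\<lambda>z. c / z\<^sup>2)" by (intro continuous_intros) auto
    show "0 \<le> c / z\<^sup>2" for z using c by simp
  qed simp
  have "(\<integral>\<^sup>+z. ennreal (exp (- ((\<lambda>z. - c / z) z - c / (\<lambda>z. - c / z) z)\<^sup>2) * (c / z\<^sup>2)) * indicator {0<..} z \<partial>lborel)
      = (\<integral>\<^sup>+z. ennreal (exp (- (z - c / z)\<^sup>2) * (c / z\<^sup>2)) * indicator {0<..} z \<partial>lborel)"
    by (rule nn_integral_cong) (use c in \<open>auto split: split_indicator simp: power2_eq_square field_simps\<close>)
  moreover have "(\<integral>\<^sup>+w. ennreal (exp (- (w - c / w)\<^sup>2)) * indicator {..<0} w \<partial>lborel) = E"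
  proof -
    have "(\<integral>\<^sup>+w. ennreal (exp (- (w - c / w)\<^sup>2)) * indicator {..<0} w \<partial>lborel)
       = ennreal \<bar>-1\<bar> * (\<integral>\<^sup>+x. ennreal (exp (- ((0 + (-1) * x) - c / (0 + (-1) * x))\<^sup>2)) * indicator {..<0} (0 + (-1) * x) \<partial>lborel)"
      by (rule nn_integral_real_affine) auto
    also have "\<dots> = E" unfolding E_def
      by (simp only: abs_minus_cancel abs_one ennreal_1 mult_1) (rule nn_integral_cong, auto split: split_indicator simp: power2_eq_square field_simps)
    finally show ?thesis .
  qed
  ultimately have B: "(\<integral>\<^sup>+z. ennreal (exp (- (z - c / z)\<^sup>2) * (c / z\<^sup>2)) * indicator {0<..} z \<partial>lborel) = E"
    using s1 unfolding T2 by simp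
  have "ennreal (sqrt pi) = (\<integral>\<^sup>+y. ennreal (exp (- (y - c / y)\<^sup>2)) * indicator {0<..} y + ennreal (exp (- (y - c / y)\<^sup>2) * (c / y\<^sup>2)) * indicator {0<..} y \<partial>lborel)"
    unfolding A by (rule nn_integral_cong) (use c in \<open>auto split: split_indicator simp: distrib_left ennreal_plus[symmetric] simp del: ennreal_plus\<close>)
  also have "\<dots> = E + (\<integral>\<^sup>+z. ennreal (exp (- (z - c / z)\<^sup>2) * (c / z\<^sup>2)) * indicator {0<..} z \<partial>lborel)"
    unfolding E_def by (rule nn_integral_add) auto
  also have "\<dots> = E + E" by (simp only: B)
  finally have EE: "E + E = ennreal (sqrt pi)" ..
  have "E \<le> E + E" by simp
  moreover have "E + E < \<infinity>" unfolding EE by simp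
  ultimately have "E < \<infinity>" by (rule le_less_trans)
  then obtain e where e: "E = ennreal e" "e \<ge> 0" by (cases E) auto
  then have "ennreal (e + e) = ennreal (sqrt pi)" using EE by (simp only: ennreal_plus[OF e(2) e(2)])
  then have "e + e = sqrt pi" using e by (subst (asm) ennreal_inj) auto
  then have "e = sqrt pi / 2" by simp
  then show ?thesis using e by (simp add: E_def)
qed

lemma subord_y:
  fixes c :: real
  assumes c: "c \<ge> 0"
  shows "(\<integral>\<^sup>+y. ennreal (exp (- y\<^sup>2 - c\<^sup>2 / y\<^sup>2)) * indicator {0<..} y \<partial>lborel) = ennreal (sqrt pi / 2 * exp (- 2 * c))"
proof (cases "c = 0")
  case True
  then show ?thesis using half_gauss by simp
next
  case False
  then have c: "c > 0" using c by simp
  have "(\<integral>\<^sup>+y. ennreal (exp (- y\<^sup>2 - c\<^sup>2 / y\<^sup>2)) * indicator {0<..} y \<partial>lborel)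
     = (\<integral>\<^sup>+y. ennreal (exp (- 2 * c)) * (ennreal (exp (- (y - c / y)\<^sup>2)) * indicator {0<..} y) \<partial>lborel)"
  proof (rule nn_integral_cong)
    fix y :: real
    show "ennreal (exp (- y\<^sup>2 - c\<^sup>2 / y\<^sup>2)) * indicator {0<..} y = ennreal (exp (- 2 * c)) * (ennreal (exp (- (y - c / y)\<^sup>2)) * indicator {0<..} y)"
    proof (cases "y > 0")
      case True
      have "- y\<^sup>2 - c\<^sup>2 / y\<^sup>2 = - 2 * c + - (y - c / y)\<^sup>2"
        using True by (simp add: power2_eq_square field_simps)
      then have "exp (- y\<^sup>2 - c\<^sup>2 / y\<^sup>2) = exp (- 2 * c) * exp (- (y - c / y)\<^sup>2)"
        by (simp add: exp_add[symmetric])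
      then show ?thesis using True by (simp add: ennreal_mult)
    qed simp
  qed
  also have "\<dots> = ennreal (exp (- 2 * c)) * ennreal (sqrt pi / 2)"
    by (subst nn_integral_cmult) (auto simp: CS_integral[OF c])
  also have "\<dots> = ennreal (sqrt pi / 2 * exp (- 2 * c))" by (simp add: ennreal_mult[symmetric] mult.commute)
  finally show ?thesis .
qed

lemma subord:
  fixes u r :: real
  assumes u: "u \<ge> 0" and r: "r \<ge> 0"
  shows "(\<integral>\<^sup>+y. ennreal (indicator {0<..} y * (2 / sqrt pi * exp (- y\<^sup>2))) * ennreal (exp (- (u\<^sup>2 / (4 * y\<^sup>2)) * r\<^sup>2)) \<partial>lborel)
       = ennreal (exp (- u * r))"
proof -
  define c where "c = u * r / 2"
  have c: "c \<ge> 0" using u r by (simp add: c_def)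
  have "(\<integral>\<^sup>+y. ennreal (indicator {0<..} y * (2 / sqrt pi * exp (- y\<^sup>2))) * ennreal (exp (- (u\<^sup>2 / (4 * y\<^sup>2)) * r\<^sup>2)) \<partial>lborel)
      = (\<integral>\<^sup>+y. ennreal (2 / sqrt pi) * (ennreal (exp (- y\<^sup>2 - c\<^sup>2 / y\<^sup>2)) * indicator {0<..} y) \<partial>lborel)"
  proof (rule nn_integral_cong)
    fix y :: real
    have "exp (- y\<^sup>2) * exp (- (u\<^sup>2 / (4 * y\<^sup>2)) * r\<^sup>2) = exp (- y\<^sup>2 - c\<^sup>2 / y\<^sup>2)"
      by (simp add: c_def exp_add[symmetric] power2_eq_square field_simps)
    then show "ennreal (indicator {0<..} y * (2 / sqrt pi * exp (- y\<^sup>2))) * ennreal (exp (- (u\<^sup>2 / (4 * y\<^sup>2)) * r\<^sup>2))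
      = ennreal (2 / sqrt pi) * (ennreal (exp (- y\<^sup>2 - c\<^sup>2 / y\<^sup>2)) * indicator {0<..} y)"
      by (auto split: split_indicator simp: ennreal_mult[symmetric] mult_ac)
  qed
  also have "\<dots> = ennreal (2 / sqrt pi) * ennreal (sqrt pi / 2 * exp (- 2 * c))"
    by (subst nn_integral_cmult) (auto simp: subord_y[OF c])
  also have "\<dots> = ennreal (exp (- u * r))"
    by (simp add: ennreal_mult[symmetric] c_def)
  finally show ?thesis .
qed

lemma gamma_scale:
  fixes s l :: real
  assumes s: "s > 0" and l: "l > 0"
  shows "(\<integral>\<^sup>+u. ennreal (indicator {0<..} u * u powr (s - 1) * exp (- l * u)) \<partial>lborel) = ennreal (Gamma s * l powr (- s))"
proof -
  define F where "F = (\<lambda>t::real. ennreal (indicator {0..} t * (t powr (s - 1) / exp t)))"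
  have "(\<integral>\<^sup>+t. F t \<partial>lborel) = ennreal (Gamma s)"
    unfolding F_def by (rule nn_integral_has_integral_lebesgue) (auto intro: Gamma_integral_real[OF s])
  moreover have "(\<integral>\<^sup>+t. F t \<partial>lborel) = ennreal \<bar>l\<bar> * (\<integral>\<^sup>+u. F (0 + l * u) \<partial>lborel)"
    by (rule nn_integral_real_affine) (use l in \<open>auto simp: F_def\<close>)
  moreover have "(\<lambda>u. F (0 + l * u)) = (\<lambda>u. ennreal (l powr (s - 1)) * ennreal (indicator {0<..} u * u powr (s - 1) * exp (- l * u)))"
  proof
    fix u :: real
    show "F (0 + l * u) = ennreal (l powr (s - 1)) * ennreal (indicator {0<..} u * u powr (s - 1) * exp (- l * u))"
    proof (cases "u > 0")
      case True
      then show ?thesis using l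
        by (simp add: F_def ennreal_mult[symmetric] powr_mult exp_minus field_simps)
    next
      case False
      then show ?thesis using l by (cases "u = 0") (auto simp: F_def zero_le_mult_iff)
    qed
  qed
  ultimately have "ennreal (Gamma s) = ennreal l * ennreal (l powr (s - 1)) * (\<integral>\<^sup>+u. ennreal (indicator {0<..} u * u powr (s - 1) * exp (- l * u)) \<partial>lborel)"
    using l by (simp add: nn_integral_cmult mult.assoc)
  also have "ennreal l * ennreal (l powr (s - 1)) = ennreal (l powr s)"
    using l by (simp add: ennreal_mult[symmetric] powr_diff field_simps)
  finally have eq: "ennreal (Gamma s) = ennreal (l powr s) * (\<integral>\<^sup>+u. ennreal (indicator {0<..} u * u powr (s - 1) * exp (- l * u)) \<partial>lborel)" .
  have "ennreal (l powr (- s)) * ennreal (Gamma s) = (ennreal (l powr (- s)) * ennreal (l powr s)) * (\<integral>\<^sup>+u. ennreal (indicator {0<..} u * u powr (s - 1) * exp (- l * u)) \<partial>lborel)"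
    unfolding eq by (simp add: mult.assoc)
  also have "ennreal (l powr (- s)) * ennreal (l powr s) = 1"
    using l by (simp add: ennreal_mult[symmetric] powr_add[symmetric])
  finally have X: "ennreal (l powr (- s)) * ennreal (Gamma s) = (\<integral>\<^sup>+u. ennreal (indicator {0<..} u * u powr (s - 1) * exp (- l * u)) \<partial>lborel)"
    by simp
  have "ennreal (Gamma s * l powr (- s)) = ennreal (l powr (- s)) * ennreal (Gamma s)"
    using Gamma_real_pos[OF s] l by (simp add: ennreal_mult mult.commute)
  then show ?thesis using X by simp
qed



lemma measurable_rGamma_real[measurable]: "(rGamma :: real \<Rightarrow> real) \<in> borel_measurable borel"
  by (rule borel_measurable_continuous_onI) (rule continuous_on_rGamma)

definition ws :: "real \<Rightarrow> real \<Rightarrow> real" where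
  "ws \<gamma> s = indicator {0<..} s * (s powr (\<gamma> - 1) * rGamma \<gamma>)"
definition wu :: "real \<Rightarrow> real \<Rightarrow> real" where
  "wu s u = indicator {0<..} s * indicator {0<..} u * (u powr (s - 1) * exp (- exp 1 * u) * rGamma s)"
definition wy :: "real \<Rightarrow> real" where
  "wy y = indicator {0<..} y * (2 / sqrt pi * exp (- y\<^sup>2))"
definition W :: "real \<Rightarrow> (real \<times> real) \<times> real \<Rightarrow> ennreal" where
  "W \<gamma> p = ennreal (ws \<gamma> (fst (fst p))) * ennreal (wu (fst (fst p)) (snd (fst p))) * ennreal (wy (snd p))"
definition Tm :: "(real \<times> real) \<times> real \<Rightarrow> real" where
  "Tm p = (snd (fst p))\<^sup>2 / (4 * (snd p)\<^sup>2)"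
definition rho :: "real \<Rightarrow> real measure" where
  "rho \<gamma> = distr (density ((lborel \<Otimes>\<^sub>M lborel) \<Otimes>\<^sub>M lborel) (W \<gamma>)) lborel Tm"

lemma ws_meas[measurable]: "ws \<gamma> \<in> borel_measurable borel" unfolding ws_def by measurable
lemma wu_meas[measurable]: "(\<lambda>p. wu (fst p) (snd p)) \<in> borel_measurable (lborel \<Otimes>\<^sub>M lborel)" unfolding wu_def by measurable
lemma wu_meas2[measurable]: "wu s \<in> borel_measurable borel" unfolding wu_def by measurable
lemma wy_meas[measurable]: "wy \<in> borel_measurable borel" unfolding wy_def by measurable
lemma W_meas[measurable]: "W \<gamma> \<in> borel_measurable ((lborel \<Otimes>\<^sub>M lborel) \<Otimes>\<^sub>M lborel)" unfolding W_def by measurable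
lemma Tm_meas[measurable]: "Tm \<in> borel_measurable ((lborel \<Otimes>\<^sub>M lborel) \<Otimes>\<^sub>M lborel)" unfolding Tm_def by measurable

lemma rGamma_Gamma: "s > 0 \<Longrightarrow> rGamma s * Gamma (s::real) = 1"
  by (simp add: Gamma_def rGamma_eq_zero_iff nonpos_Ints_def)

lemma rGamma_pos: "s > 0 \<Longrightarrow> rGamma s > (0::real)"
  using rGamma_Gamma[of s] Gamma_real_pos[of s] by (metis zero_less_mult_pos2 zero_less_one)

lemma ws_nonneg: "\<gamma> > 0 \<Longrightarrow> ws \<gamma> s \<ge> 0"
  using rGamma_pos[of \<gamma>] by (auto simp: ws_def split: split_indicator)
lemma wu_nonneg: "wu s u \<ge> 0"
  using rGamma_pos[of s] by (auto simp: wu_def split: split_indicator)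

lemma rho_laplace_nn:
  fixes \<gamma> r :: real
  assumes g: "\<gamma> > 0" and r: "r \<ge> 0"
  shows "(\<integral>\<^sup>+t. ennreal (exp (- t * r\<^sup>2)) \<partial>rho \<gamma>) = ennreal (ln (exp 1 + r) powr (- \<gamma>))"
proof -
  have "(\<integral>\<^sup>+t. ennreal (exp (- t * r\<^sup>2)) \<partial>rho \<gamma>)
      = (\<integral>\<^sup>+p. ennreal (exp (- Tm p * r\<^sup>2)) \<partial>density ((lborel \<Otimes>\<^sub>M lborel) \<Otimes>\<^sub>M lborel) (W \<gamma>))"
    unfolding rho_def by (subst nn_integral_distr) (auto simp: measurable_cong_sets[OF sets_density refl])
  also have "\<dots> = (\<integral>\<^sup>+p. W \<gamma> p * ennreal (exp (- Tm p * r\<^sup>2)) \<partial>((lborel \<Otimes>\<^sub>M lborel) \<Otimes>\<^sub>M lborel))"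
    by (subst nn_integral_density) auto
  also have "\<dots> = (\<integral>\<^sup>+su. \<integral>\<^sup>+y. W \<gamma> (su, y) * ennreal (exp (- Tm (su, y) * r\<^sup>2)) \<partial>lborel \<partial>(lborel \<Otimes>\<^sub>M lborel))"
    by (subst lborel.nn_integral_fst[symmetric]) auto
  also have "\<dots> = (\<integral>\<^sup>+su. ennreal (ws \<gamma> (fst su)) * ennreal (wu (fst su) (snd su)) * ennreal (exp (- snd su * r)) \<partial>(lborel \<Otimes>\<^sub>M lborel))"
  proof (rule nn_integral_cong)
    fix su :: "real \<times> real"
    obtain s u where su: "su = (s, u)" by (cases su)
    have "(\<integral>\<^sup>+y. W \<gamma> (su, y) * ennreal (exp (- Tm (su, y) * r\<^sup>2)) \<partial>lborel)
       = (\<integral>\<^sup>+y. (ennreal (ws \<gamma> s) * ennreal (wu s u)) * (ennreal (wy y) * ennreal (exp (- (u\<^sup>2 / (4 * y\<^sup>2)) * r\<^sup>2))) \<partial>lborel)"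
      by (simp add: W_def Tm_def su mult_ac)
    also have "\<dots> = (ennreal (ws \<gamma> s) * ennreal (wu s u)) * (\<integral>\<^sup>+y. ennreal (wy y) * ennreal (exp (- (u\<^sup>2 / (4 * y\<^sup>2)) * r\<^sup>2)) \<partial>lborel)"
      by (rule nn_integral_cmult) auto
    also have "\<dots> = (ennreal (ws \<gamma> s) * ennreal (wu s u)) * ennreal (exp (- u * r))"
    proof (cases "u > 0")
      case True
      then show ?thesis using subord[of u r] r unfolding wy_def by simp
    next
      case False
      then show ?thesis by (simp add: wu_def)
    qed
    finally show "(\<integral>\<^sup>+y. W \<gamma> (su, y) * ennreal (exp (- Tm (su, y) * r\<^sup>2)) \<partial>lborel)
       = ennreal (ws \<gamma> (fst su)) * ennreal (wu (fst su) (snd su)) * ennreal (exp (- snd su * r))"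
      by (simp add: su)
  qed
  also have "\<dots> = (\<integral>\<^sup>+s. \<integral>\<^sup>+u. ennreal (ws \<gamma> s) * ennreal (wu s u) * ennreal (exp (- u * r)) \<partial>lborel \<partial>lborel)"
    by (subst lborel.nn_integral_fst[symmetric]) auto
  also have "\<dots> = (\<integral>\<^sup>+s. ennreal (ws \<gamma> s) * ennreal ((exp 1 + r) powr (- s)) \<partial>lborel)"
  proof (rule nn_integral_cong)
    fix s :: real
    have "(\<integral>\<^sup>+u. ennreal (ws \<gamma> s) * ennreal (wu s u) * ennreal (exp (- u * r)) \<partial>lborel)
       = ennreal (ws \<gamma> s) * (\<integral>\<^sup>+u. ennreal (wu s u) * ennreal (exp (- u * r)) \<partial>lborel)"
      by (subst nn_integral_cmult[symmetric]) (auto simp: mult.assoc)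
    also have "\<dots> = ennreal (ws \<gamma> s) * ennreal ((exp 1 + r) powr (- s))"
    proof (cases "s > 0")
      case s: True
      have "(\<integral>\<^sup>+u. ennreal (wu s u) * ennreal (exp (- u * r)) \<partial>lborel)
          = (\<integral>\<^sup>+u. ennreal (rGamma s) * ennreal (indicator {0<..} u * u powr (s - 1) * exp (- (exp 1 + r) * u)) \<partial>lborel)"
      proof (rule nn_integral_cong)
        fix u :: real
        have "exp (- exp 1 * u) * exp (- u * r) = exp (- (exp 1 + r) * u)"
          by (simp add: exp_add[symmetric] algebra_simps)
        then have "wu s u * exp (- u * r) = rGamma s * (indicator {0<..} u * u powr (s - 1) * exp (- (exp 1 + r) * u))"
          using s by (auto simp: wu_def split: split_indicator simp del: exp_add)
        moreover have "ennreal (wu s u) * ennreal (exp (- u * r)) = ennreal (wu s u * exp (- u * r))"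
          by (rule ennreal_mult[symmetric]) (auto simp: wu_nonneg)
        moreover have "ennreal (rGamma s) * ennreal (indicator {0<..} u * u powr (s - 1) * exp (- (exp 1 + r) * u))
            = ennreal (rGamma s * (indicator {0<..} u * u powr (s - 1) * exp (- (exp 1 + r) * u)))"
          by (rule ennreal_mult[symmetric]) (use rGamma_pos[OF s] in auto)
        ultimately show "ennreal (wu s u) * ennreal (exp (- u * r)) = ennreal (rGamma s) * ennreal (indicator {0<..} u * u powr (s - 1) * exp (- (exp 1 + r) * u))"
          by simp
      qed
      also have "\<dots> = ennreal (rGamma s) * ennreal (Gamma s * (exp 1 + r) powr (- s))"
      proof -
        have gs: "(\<integral>\<^sup>+u. ennreal (indicator {0<..} u * u powr (s - 1) * exp (- (exp 1 + r) * u)) \<partial>lborel)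
            = ennreal (Gamma s * (exp 1 + r) powr (- s))"
          by (rule gamma_scale[OF s]) (use r in \<open>simp add: add_pos_nonneg\<close>)
        show ?thesis by (subst nn_integral_cmult) (simp, simp only: gs)
      qed
      also have "\<dots> = ennreal (rGamma s * (Gamma s * (exp 1 + r) powr (- s)))"
        by (rule ennreal_mult[symmetric]) (use rGamma_pos[OF s] Gamma_real_pos[OF s] in auto)
      also have "rGamma s * (Gamma s * (exp 1 + r) powr (- s)) = (exp 1 + r) powr (- s)"
        using rGamma_Gamma[OF s] by (simp add: mult.assoc[symmetric])
      finally show ?thesis by simp
    next
      case False
      then show ?thesis by (simp add: ws_def)
    qed
    finally show "(\<integral>\<^sup>+u. ennreal (ws \<gamma> s) * ennreal (wu s u) * ennreal (exp (- u * r)) \<partial>lborel)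
       = ennreal (ws \<gamma> s) * ennreal ((exp 1 + r) powr (- s))" .
  qed
  also have "\<dots> = (\<integral>\<^sup>+s. ennreal (rGamma \<gamma>) * ennreal (indicator {0<..} s * s powr (\<gamma> - 1) * exp (- ln (exp 1 + r) * s)) \<partial>lborel)"
  proof (rule nn_integral_cong)
    fix s :: real
    have "(exp 1 + r) powr (- s) = exp (- ln (exp 1 + r) * s)"
    proof -
      have "exp 1 + r > 0" using r by (simp add: add_pos_nonneg)
      then show ?thesis by (simp add: powr_def)
    qed
    then show "ennreal (ws \<gamma> s) * ennreal ((exp 1 + r) powr (- s)) = ennreal (rGamma \<gamma>) * ennreal (indicator {0<..} s * s powr (\<gamma> - 1) * exp (- ln (exp 1 + r) * s))"
      using g rGamma_pos[OF g] by (auto simp: ws_def split: split_indicator simp flip: ennreal_mult)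
  qed
  also have "\<dots> = ennreal (rGamma \<gamma>) * ennreal (Gamma \<gamma> * ln (exp 1 + r) powr (- \<gamma>))"
  proof -
    have "1 < exp (1::real)" by simp
    then have "1 < exp 1 + r" using r by linarith
    then have "ln (exp 1 + r) > 0" by simp
    then have gs: "(\<integral>\<^sup>+s. ennreal (indicator {0<..} s * s powr (\<gamma> - 1) * exp (- ln (exp 1 + r) * s)) \<partial>lborel)
            = ennreal (Gamma \<gamma> * ln (exp 1 + r) powr (- \<gamma>))"
      by (rule gamma_scale[OF g])
    show ?thesis by (subst nn_integral_cmult) (simp, simp only: gs)
  qed
  also have "\<dots> = ennreal (rGamma \<gamma> * (Gamma \<gamma> * ln (exp 1 + r) powr (- \<gamma>)))"
    by (rule ennreal_mult[symmetric]) (use rGamma_pos[OF g] Gamma_real_pos[OF g] in auto)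
  also have "rGamma \<gamma> * (Gamma \<gamma> * ln (exp 1 + r) powr (- \<gamma>)) = ln (exp 1 + r) powr (- \<gamma>)"
    using rGamma_Gamma[OF g] by (simp add: mult.assoc[symmetric])
  finally show ?thesis .
qed

lemma sets_rho[measurable_cong]: "sets (rho \<gamma>) = sets borel"
  by (simp add: rho_def)

lemma space_rho: "space (rho \<gamma>) = UNIV"
  by (simp add: rho_def)

lemma rho_exists:
  fixes \<gamma> :: real
  assumes g: "\<gamma> > 0"
  shows "\<exists>\<rho>. prob_space \<rho> \<and> sets \<rho> = sets borel \<and> (AE t in \<rho>. 0 \<le> t)
     \<and> (\<forall>r>0. integral\<^sup>L \<rho> (\<lambda>t. exp (- t * r\<^sup>2)) = ln (exp 1 + r) powr (- \<gamma>))"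
proof (intro exI conjI allI impI)
  show "sets (rho \<gamma>) = sets borel" by (rule sets_rho)
  have "(\<integral>\<^sup>+t. ennreal (exp (- t * 0\<^sup>2)) \<partial>rho \<gamma>) = ennreal (ln (exp 1 + 0) powr (- \<gamma>))"
    by (rule rho_laplace_nn[OF g]) simp
  then have "emeasure (rho \<gamma>) (space (rho \<gamma>)) = 1"
    by (simp add: nn_integral_const)
  then show "prob_space (rho \<gamma>)" by (rule prob_spaceI)
  show "AE t in rho \<gamma>. 0 \<le> t"
    unfolding rho_def
    by (subst AE_distr_iff) (auto simp: measurable_cong_sets[OF sets_density refl] Tm_def)
  fix r :: real assume r: "r > 0"
  have "integral\<^sup>L (rho \<gamma>) (\<lambda>t. exp (- t * r\<^sup>2)) = enn2real (\<integral>\<^sup>+t. ennreal (exp (- t * r\<^sup>2)) \<partial>rho \<gamma>)"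
    by (rule integral_eq_nn_integral) auto
  also have "\<dots> = ln (exp 1 + r) powr (- \<gamma>)"
    using r by (simp only: rho_laplace_nn[OF g, of r] less_imp_le[OF r]) simp
  finally show "integral\<^sup>L (rho \<gamma>) (\<lambda>t. exp (- t * r\<^sup>2)) = ln (exp 1 + r) powr (- \<gamma>)" .
qed



lemma exp_int:
  fixes c :: real assumes c: "c > 0"
  shows "(\<integral>\<^sup>+\<tau>. ennreal (indicator {0<..} \<tau> * exp (- c * \<tau>)) \<partial>lborel) = ennreal (1 / c)"
proof -
  have "(\<integral>\<^sup>+\<tau>. ennreal (indicator {0<..} \<tau> * exp (- c * \<tau>)) \<partial>lborel)
     = (\<integral>\<^sup>+u. ennreal (indicator {0<..} u * u powr (1 - 1) * exp (- c * u)) \<partial>lborel)"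
    by (rule nn_integral_cong) (auto split: split_indicator)
  also have "\<dots> = ennreal (Gamma 1 * c powr (- 1))" by (rule gamma_scale) (use c in auto)
  also have "Gamma 1 * c powr (- 1) = 1 / c" using c by (simp add: powr_minus_divide)
  finally show ?thesis .
qed

definition Pf :: "real \<Rightarrow> real" where "Pf w = 1 - (1 + w) * exp (- w)"

lemma tau_int:
  fixes b R :: real assumes b: "b > 0" and R: "R > 0"
  shows "(\<integral>\<^sup>+\<tau>. ennreal (indicator {0<..} \<tau> * (1 / (\<tau> + b) ^ 3 * exp (- R / (\<tau> + b)))) \<partial>lborel)
     = ennreal (Pf (R / b) / R\<^sup>2)"
proof -
  define F where "F \<tau> = exp (- R / (\<tau> + b)) * (1 / (R * (\<tau> + b)) + 1 / R\<^sup>2)" for \<tau>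
  have "(\<integral>\<^sup>+\<tau>\<in>{0..}. ennreal (1 / (\<tau> + b) ^ 3 * exp (- R / (\<tau> + b))) \<partial>lborel) = ennreal (1 / R\<^sup>2 - F 0)"
  proof (rule nn_integral_FTC_atLeast)
    show "(\<lambda>\<tau>. 1 / (\<tau> + b) ^ 3 * exp (- R / (\<tau> + b))) \<in> borel_measurable borel" by measurable
    show "(F has_real_derivative 1 / (\<tau> + b) ^ 3 * exp (- R / (\<tau> + b))) (at \<tau>)" if "0 \<le> \<tau>" for \<tau>
    proof -
      define G where "G a = exp (- R / a) * (1 / (R * a) + 1 / R\<^sup>2)" for a
      have a: "\<tau> + b > 0" using that b by simp
      have G: "(G has_real_derivative 1 / (\<tau> + b) ^ 3 * exp (- R / (\<tau> + b))) (at (\<tau> + b))"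
      proof -
        define a where "a = \<tau> + b"
        have "a > 0" using a by (simp add: a_def)
        have "(G has_real_derivative exp (- R / a) * (R / a\<^sup>2) * (1 / (R * a) + 1 / R\<^sup>2) + exp (- R / a) * (- (R / (R * a)\<^sup>2))) (at a)"
          unfolding G_def using \<open>a > 0\<close> R
          by (auto intro!: derivative_eq_intros simp: power2_eq_square)
        moreover have "exp (- R / a) * (R / a\<^sup>2) * (1 / (R * a) + 1 / R\<^sup>2) + exp (- R / a) * (- (R / (R * a)\<^sup>2)) = 1 / a ^ 3 * exp (- R / a)"
          using \<open>a > 0\<close> R by (simp add: field_simps power2_eq_square power3_eq_cube)
        ultimately show ?thesis by (simp add: a_def)
      qed
      have "((G \<circ> (\<lambda>\<tau>. \<tau> + b)) has_real_derivative (1 / (\<tau> + b) ^ 3 * exp (- R / (\<tau> + b))) * 1) (at \<tau>)"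
        by (rule DERIV_chain[where g = "\<lambda>\<tau>. \<tau> + b", OF G]) (auto intro!: derivative_eq_intros)
      moreover have "G \<circ> (\<lambda>\<tau>. \<tau> + b) = F" by (simp add: fun_eq_iff G_def F_def)
      ultimately show ?thesis by simp
    qed
    show "0 \<le> 1 / (\<tau> + b) ^ 3 * exp (- R / (\<tau> + b))" if "0 \<le> \<tau>" for \<tau> using that b by simp
    show "(F \<longlongrightarrow> 1 / R\<^sup>2) at_top" unfolding F_def using R b by real_asymp
  qed
  moreover have "(\<integral>\<^sup>+\<tau>. ennreal (indicator {0<..} \<tau> * (1 / (\<tau> + b) ^ 3 * exp (- R / (\<tau> + b)))) \<partial>lborel)
      = (\<integral>\<^sup>+\<tau>\<in>{0..}. ennreal (1 / (\<tau> + b) ^ 3 * exp (- R / (\<tau> + b))) \<partial>lborel)"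
    by (rule nn_integral_cong_AE) (use AE_lborel_singleton[of 0] in \<open>eventually_elim, auto split: split_indicator\<close>)
  moreover have "1 / R\<^sup>2 - F 0 = Pf (R / b) / R\<^sup>2"
    unfolding F_def Pf_def using R b by (simp add: field_simps power2_eq_square)
  ultimately show ?thesis by simp
qed

locale rho_ctx =
  fixes \<gamma> :: real and \<rho> :: "real measure"
  assumes g: "\<gamma> > 0" and P: "prob_space \<rho>" and S: "sets \<rho> = sets borel"
    and AEt: "AE t in \<rho>. 0 \<le> t"
    and L: "\<And>r. r > 0 \<Longrightarrow> integral\<^sup>L \<rho> (\<lambda>t. exp (- t * r\<^sup>2)) = ln (exp 1 + r) powr (- \<gamma>)"
begin

declare S[measurable_cong]

lemma sf: "sigma_finite_measure \<rho>" by (rule prob_space_imp_sigma_finite[OF P])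

sublocale R: sigma_finite_measure \<rho> by (rule sf)
sublocale PN: pair_sigma_finite lborel \<rho> ..

lemma sfN: "sigma_finite_measure (lborel \<Otimes>\<^sub>M \<rho>)"
  by (rule sigma_finite_pair_measure) (auto intro: sf lborel.sigma_finite_measure_axioms)

lemma fin: "finite_measure \<rho>" using P by (simp add: prob_space_def)

lemma laplace_nn:
  assumes c: "c > 0"
  shows "(\<integral>\<^sup>+t. ennreal (exp (- t * c)) \<partial>\<rho>) = ennreal (ln (exp 1 + sqrt c) powr (- \<gamma>))"
proof -
  have int: "integrable \<rho> (\<lambda>t. exp (- t * c))"
  proof (rule finite_measure.integrable_const_bound[OF fin, where B = 1])
    show "AE t in \<rho>. norm (exp (- t * c)) \<le> 1" using AEt by eventually_elim (use c in simp)
  qed simp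
  have "(\<integral>\<^sup>+t. ennreal (exp (- t * c)) \<partial>\<rho>) = ennreal (integral\<^sup>L \<rho> (\<lambda>t. exp (- t * c)))"
    by (rule nn_integral_eq_integral[OF int]) simp
  also have "integral\<^sup>L \<rho> (\<lambda>t. exp (- t * c)) = ln (exp 1 + sqrt c) powr (- \<gamma>)"
    using L[of "sqrt c"] c by simp
  finally show ?thesis .
qed

lemma A_nn:
  assumes c: "c > 0"
  shows "(\<integral>\<^sup>+\<theta>. ennreal (indicator {0<..} (fst \<theta>) * exp (- (fst \<theta> + snd \<theta>) * c)) \<partial>(lborel \<Otimes>\<^sub>M \<rho>))
     = ennreal (ln (exp 1 + sqrt c) powr (- \<gamma>) / c)"
proof -
  have "(\<integral>\<^sup>+\<theta>. ennreal (indicator {0<..} (fst \<theta>) * exp (- (fst \<theta> + snd \<theta>) * c)) \<partial>(lborel \<Otimes>\<^sub>M \<rho>))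
     = (\<integral>\<^sup>+\<tau>. \<integral>\<^sup>+t. ennreal (indicator {0<..} \<tau> * exp (- (\<tau> + t) * c)) \<partial>\<rho> \<partial>lborel)"
    by (subst R.nn_integral_fst[symmetric]) auto
  also have "\<dots> = (\<integral>\<^sup>+\<tau>. ennreal (indicator {0<..} \<tau> * exp (- c * \<tau>)) * ennreal (ln (exp 1 + sqrt c) powr (- \<gamma>)) \<partial>lborel)"
  proof (rule nn_integral_cong)
    fix \<tau> :: real
    have "(\<integral>\<^sup>+t. ennreal (indicator {0<..} \<tau> * exp (- (\<tau> + t) * c)) \<partial>\<rho>)
       = (\<integral>\<^sup>+t. ennreal (indicator {0<..} \<tau> * exp (- c * \<tau>)) * ennreal (exp (- t * c)) \<partial>\<rho>)"
      by (rule nn_integral_cong) (auto simp: ennreal_mult[symmetric] exp_add[symmetric] algebra_simps)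
    also have "\<dots> = ennreal (indicator {0<..} \<tau> * exp (- c * \<tau>)) * (\<integral>\<^sup>+t. ennreal (exp (- t * c)) \<partial>\<rho>)"
      by (rule nn_integral_cmult) simp
    finally show "(\<integral>\<^sup>+t. ennreal (indicator {0<..} \<tau> * exp (- (\<tau> + t) * c)) \<partial>\<rho>)
       = ennreal (indicator {0<..} \<tau> * exp (- c * \<tau>)) * ennreal (ln (exp 1 + sqrt c) powr (- \<gamma>))"
      by (simp only: laplace_nn[OF c])
  qed
  also have "\<dots> = (\<integral>\<^sup>+\<tau>. ennreal (indicator {0<..} \<tau> * exp (- c * \<tau>)) \<partial>lborel) * ennreal (ln (exp 1 + sqrt c) powr (- \<gamma>))"
    by (rule nn_integral_multc) simp
  also have "\<dots> = ennreal (1 / c) * ennreal (ln (exp 1 + sqrt c) powr (- \<gamma>))"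
    by (simp only: exp_int[OF c])
  also have "\<dots> = ennreal (ln (exp 1 + sqrt c) powr (- \<gamma>) / c)"
    using c by (simp add: ennreal_mult[symmetric])
  finally show ?thesis .
qed

lemma A:
  assumes c: "c > 0"
  shows "integrable (lborel \<Otimes>\<^sub>M \<rho>) (\<lambda>\<theta>. indicator {0<..} (fst \<theta>) * exp (- (fst \<theta> + snd \<theta>) * c))"
    and "integral\<^sup>L (lborel \<Otimes>\<^sub>M \<rho>) (\<lambda>\<theta>. indicator {0<..} (fst \<theta>) * exp (- (fst \<theta> + snd \<theta>) * c))
         = ln (exp 1 + sqrt c) powr (- \<gamma>) / c"
proof -
  show "integrable (lborel \<Otimes>\<^sub>M \<rho>) (\<lambda>\<theta>. indicator {0<..} (fst \<theta>) * exp (- (fst \<theta> + snd \<theta>) * c))"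
  proof (rule integrableI_nonneg)
    show "(\<integral>\<^sup>+\<theta>. ennreal (indicator {0<..} (fst \<theta>) * exp (- (fst \<theta> + snd \<theta>) * c)) \<partial>(lborel \<Otimes>\<^sub>M \<rho>)) < \<infinity>"
      by (simp only: A_nn[OF c]) simp
  qed auto
  have "integral\<^sup>L (lborel \<Otimes>\<^sub>M \<rho>) (\<lambda>\<theta>. indicator {0<..} (fst \<theta>) * exp (- (fst \<theta> + snd \<theta>) * c))
      = enn2real (ennreal (ln (exp 1 + sqrt c) powr (- \<gamma>) / c))"
    by (subst integral_eq_nn_integral) (auto simp only: A_nn[OF c], auto)
  then show "integral\<^sup>L (lborel \<Otimes>\<^sub>M \<rho>) (\<lambda>\<theta>. indicator {0<..} (fst \<theta>) * exp (- (fst \<theta> + snd \<theta>) * c))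
         = ln (exp 1 + sqrt c) powr (- \<gamma>) / c"
    using c by simp
qed

end



lemma gauss2_int:
  assumes e: "\<epsilon> > 0"
  shows "integrable (lborel :: (real \<times> real) measure) (\<lambda>k. exp (- \<epsilon> * (norm k)\<^sup>2))"
proof -
  have i: "integrable lborel (\<lambda>y::real. complex_of_real (exp (- \<epsilon> * y\<^sup>2)))"
    using gauss_integrable[OF e, of 0] by simp
  have "integrable (lborel \<Otimes>\<^sub>M lborel) (\<lambda>(a, b). complex_of_real (exp (- \<epsilon> * a\<^sup>2)) * complex_of_real (exp (- \<epsilon> * b\<^sup>2)))"
    by (rule integral_prod_mult_complex(1)[OF i i])
  also have "(\<lambda>(a, b). complex_of_real (exp (- \<epsilon> * a\<^sup>2)) * complex_of_real (exp (- \<epsilon> * b\<^sup>2)))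
      = (\<lambda>k. complex_of_real (exp (- \<epsilon> * (norm k)\<^sup>2)))"
    by (auto simp: fun_eq_iff norm_Pair exp_add[symmetric] algebra_simps simp flip: of_real_mult)
  finally show ?thesis by (simp add: lborel_prod complex_of_real_integrable_eq)
qed

lemma Pf_bounds: "w \<ge> 0 \<Longrightarrow> 0 \<le> Pf w \<and> Pf w \<le> 1"
proof -
  assume w: "w \<ge> 0"
  have "1 + w \<le> exp w" by (rule exp_ge_add_one_self)
  then have "(1 + w) * exp (- w) \<le> 1" by (simp add: exp_minus field_simps)
  moreover have "0 \<le> (1 + w) * exp (- w)" using w by simp
  ultimately show ?thesis by (simp add: Pf_def)
qed

lemma powr_neg_le1: "x \<ge> 1 \<Longrightarrow> g > 0 \<Longrightarrow> x powr (- g) \<le> (1::real)"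
proof -
  assume "x \<ge> 1" "g > 0"
  then have "1 \<le> x powr g" by (intro ge_one_powr_ge_zero) auto
  then show ?thesis by (simp add: powr_minus inverse_le_1_iff)
qed

lemma meas_k1k2[measurable]: "(\<lambda>k::real\<times>real. fst k * snd k) \<in> borel_measurable borel"
  by (rule borel_measurable_continuous_onI) (intro continuous_intros)
lemma meas_nk[measurable]: "(\<lambda>k::real\<times>real. (norm k)\<^sup>2) \<in> borel_measurable borel"
  by (rule borel_measurable_continuous_onI) (intro continuous_intros)
lemma meas_cisk[measurable]: "(\<lambda>k::real\<times>real. cis (inner k x)) \<in> borel_measurable borel"
  by (rule borel_measurable_continuous_onI) (simp add: cis_conv_exp continuous_intros)

context rho_ctx begin

lemma kernel_formula:
  assumes e: "\<epsilon> > 0" and x1: "x1 > 0" and x2: "x2 > 0"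
  shows "kernel_eps \<gamma> \<epsilon> (x1, x2) = complex_of_real (x1 * x2 / (pi * (norm (x1, x2)) ^ 4)
           * integral\<^sup>L \<rho> (\<lambda>t. indicator {0..} t * Pf (((norm (x1, x2))\<^sup>2 / 4) / (t + \<epsilon>))))"
proof -
  define x where "x = (x1, x2)"
  define R where "R = (norm x)\<^sup>2 / 4"
  have R: "R > 0" using x1 by (simp add: R_def x_def norm_Pair add_pos_nonneg)
  define N where "N = (lborel :: real measure) \<Otimes>\<^sub>M \<rho>"
  interpret N: sigma_finite_measure N unfolding N_def by (rule sfN)
  interpret P2: pair_sigma_finite "lborel :: (real \<times> real) measure" N ..
  define Fc where "Fc k \<theta> = complex_of_real (indicator {0<..} (fst \<theta>) * (- (fst k * snd k))
      * exp (- (fst \<theta> + snd \<theta> + \<epsilon>) * (norm k)\<^sup>2)) * cis (inner k x)" for k :: "real \<times> real" and \<theta> :: "real \<times> real"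
  have Fc_meas[measurable]: "case_prod Fc \<in> borel_measurable ((lborel :: (real \<times> real) measure) \<Otimes>\<^sub>M N)"
    unfolding Fc_def N_def by measurable
  have expsplit: "exp (- (a + b + \<epsilon>) * c) = exp (- \<epsilon> * c) * exp (- (a + b) * c)" for a b c :: real
    by (subst exp_add[symmetric]) (simp add: algebra_simps)
  have Fc_eq: "Fc k \<theta> = (complex_of_real (- (fst k * snd k) * exp (- \<epsilon> * (norm k)\<^sup>2)) * cis (inner k x))
      * complex_of_real (indicator {0<..} (fst \<theta>) * exp (- (fst \<theta> + snd \<theta>) * (norm k)\<^sup>2))" for k \<theta>
    unfolding Fc_def expsplit by (simp add: mult_ac)
  have kk: "\<bar>fst k * snd k\<bar> \<le> (norm k)\<^sup>2" for k :: "real \<times> real"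
  proof -
    obtain a b where k: "k = (a, b)" by (cases k)
    have h1: "2 * \<bar>a\<bar> * \<bar>b\<bar> \<le> a\<^sup>2 + b\<^sup>2" using sum_squares_bound[of "\<bar>a\<bar>" "\<bar>b\<bar>"] by simp
    have h2: "\<bar>a * b\<bar> \<le> 2 * \<bar>a\<bar> * \<bar>b\<bar>" by (simp add: abs_mult)
    from h1 h2 have "\<bar>a * b\<bar> \<le> a\<^sup>2 + b\<^sup>2" by linarith
    then show ?thesis by (simp add: k norm_Pair)
  qed
  have nFc: "norm (Fc k \<theta>) = \<bar>fst k * snd k\<bar> * exp (- \<epsilon> * (norm k)\<^sup>2) * (indicator {0<..} (fst \<theta>) * exp (- (fst \<theta> + snd \<theta>) * (norm k)\<^sup>2))" for k \<theta>
    unfolding Fc_eq by (simp add: norm_mult abs_mult)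
  have Fint: "integrable ((lborel :: (real \<times> real) measure) \<Otimes>\<^sub>M N) (case_prod Fc)"
  proof (rule integrableI_bounded)
    show "case_prod Fc \<in> borel_measurable (lborel \<Otimes>\<^sub>M N)" by (rule Fc_meas)
    have "(\<integral>\<^sup>+p. ennreal (norm (case_prod Fc p)) \<partial>(lborel \<Otimes>\<^sub>M N)) = (\<integral>\<^sup>+k. \<integral>\<^sup>+\<theta>. ennreal (norm (Fc k \<theta>)) \<partial>N \<partial>lborel)"
      by (subst N.nn_integral_fst[symmetric]) auto
    also have "\<dots> \<le> (\<integral>\<^sup>+k. ennreal (exp (- \<epsilon> * (norm (k :: real \<times> real))\<^sup>2)) \<partial>lborel)"
    proof (rule nn_integral_mono)
      fix k :: "real \<times> real"
      show "(\<integral>\<^sup>+\<theta>. ennreal (norm (Fc k \<theta>)) \<partial>N) \<le> ennreal (exp (- \<epsilon> * (norm k)\<^sup>2))"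
      proof (cases "k = 0")
        case True
        then show ?thesis by (simp add: Fc_def)
      next
        case False
        define c where "c = (norm k)\<^sup>2"
        have c: "c > 0" using False by (simp add: c_def)
        have "(\<integral>\<^sup>+\<theta>. ennreal (norm (Fc k \<theta>)) \<partial>N)
            = (\<integral>\<^sup>+\<theta>. ennreal (\<bar>fst k * snd k\<bar> * exp (- \<epsilon> * c)) * ennreal (indicator {0<..} (fst \<theta>) * exp (- (fst \<theta> + snd \<theta>) * c)) \<partial>N)"
          unfolding nFc c_def by (rule nn_integral_cong) (simp add: ennreal_mult)
        also have "\<dots> = ennreal (\<bar>fst k * snd k\<bar> * exp (- \<epsilon> * c)) * (\<integral>\<^sup>+\<theta>. ennreal (indicator {0<..} (fst \<theta>) * exp (- (fst \<theta> + snd \<theta>) * c)) \<partial>N)"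
          by (rule nn_integral_cmult) (simp add: N_def)
        also have "(\<integral>\<^sup>+\<theta>. ennreal (indicator {0<..} (fst \<theta>) * exp (- (fst \<theta> + snd \<theta>) * c)) \<partial>N) = ennreal (ln (exp 1 + sqrt c) powr (- \<gamma>) / c)"
          unfolding N_def by (rule A_nn[OF c])
        also have "ennreal (\<bar>fst k * snd k\<bar> * exp (- \<epsilon> * c)) * ennreal (ln (exp 1 + sqrt c) powr (- \<gamma>) / c)
            = ennreal (\<bar>fst k * snd k\<bar> * exp (- \<epsilon> * c) * (ln (exp 1 + sqrt c) powr (- \<gamma>) / c))"
          by (rule ennreal_mult[symmetric]) (use c in auto)
        also have "\<dots> \<le> ennreal (exp (- \<epsilon> * (norm k)\<^sup>2))"
        proof (rule ennreal_leI)
          have l1: "ln (exp 1 + sqrt c) powr (- \<gamma>) \<le> 1"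
          proof (rule powr_neg_le1[OF _ g])
            have "exp 1 \<le> exp 1 + sqrt c" using c by simp
            then show "1 \<le> ln (exp 1 + sqrt c)" by (metis ln_exp ln_le_cancel_iff exp_gt_zero order.strict_trans2 less_le_trans)
          qed
          have l0: "0 \<le> ln (exp 1 + sqrt c) powr (- \<gamma>)" by simp
          have "\<bar>fst k * snd k\<bar> / c \<le> 1" using kk[of k] c by (simp add: c_def)
          then have "\<bar>fst k * snd k\<bar> / c * ln (exp 1 + sqrt c) powr (- \<gamma>) \<le> 1 * 1"
            using l0 l1 by (intro mult_mono) auto
          then have "exp (- \<epsilon> * c) * (\<bar>fst k * snd k\<bar> / c * ln (exp 1 + sqrt c) powr (- \<gamma>)) \<le> exp (- \<epsilon> * c) * 1"
            by (intro mult_left_mono) auto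
          then show "\<bar>fst k * snd k\<bar> * exp (- \<epsilon> * c) * (ln (exp 1 + sqrt c) powr (- \<gamma>) / c) \<le> exp (- \<epsilon> * (norm k)\<^sup>2)"
            by (simp add: c_def mult_ac)
        qed
        finally show ?thesis .
      qed
    qed
    also have "\<dots> < \<infinity>"
      using gauss2_int[OF e] unfolding integrable_iff_bounded by simp
    finally show "(\<integral>\<^sup>+p. ennreal (norm (case_prod Fc p)) \<partial>(lborel \<Otimes>\<^sub>M N)) < \<infinity>" .
  qed
  have inner1: "(\<integral>\<theta>. Fc k \<theta> \<partial>N) = complex_of_real (symb \<gamma> k * exp (- \<epsilon> * (norm k)\<^sup>2)) * cis (inner k x)" for k
  proof (cases "k = 0")
    case True
    then show ?thesis by (simp add: Fc_def symb_def)
  next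
    case False
    define c where "c = (norm k)\<^sup>2"
    have c: "c > 0" using False by (simp add: c_def)
    have "(\<integral>\<theta>. Fc k \<theta> \<partial>N) = (complex_of_real (- (fst k * snd k) * exp (- \<epsilon> * c)) * cis (inner k x))
        * complex_of_real (integral\<^sup>L N (\<lambda>\<theta>. indicator {0<..} (fst \<theta>) * exp (- (fst \<theta> + snd \<theta>) * c)))"
      unfolding Fc_eq c_def by (simp only: integral_mult_right_zero integral_complex_of_real)
    also have "integral\<^sup>L N (\<lambda>\<theta>. indicator {0<..} (fst \<theta>) * exp (- (fst \<theta> + snd \<theta>) * c)) = ln (exp 1 + sqrt c) powr (- \<gamma>) / c"
      unfolding N_def by (rule A(2)[OF c])
    also have "sqrt c = norm k" by (simp add: c_def)
    finally have X: "(\<integral>\<theta>. Fc k \<theta> \<partial>N) = complex_of_real (- (fst k * snd k) * exp (- \<epsilon> * c)) * cis (inner k x) * complex_of_real (ln (exp 1 + norm k) powr (- \<gamma>) / c)" .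
    have r: "symb \<gamma> k * exp (- \<epsilon> * (norm k)\<^sup>2) = (- (fst k * snd k) * exp (- \<epsilon> * c)) * (ln (exp 1 + norm k) powr (- \<gamma>) / c)"
      by (simp add: symb_def c_def)
    show ?thesis unfolding X r of_real_mult by (simp only: mult_ac)
  qed
  define h where "h \<theta> = indicator {0<..} (fst \<theta>) * indicator {0..} (snd \<theta>) *
      (pi * x1 * x2 / (4 * (fst \<theta> + snd \<theta> + \<epsilon>) ^ 3) * exp (- (norm x)\<^sup>2 / (4 * (fst \<theta> + snd \<theta> + \<epsilon>))))" for \<theta> :: "real \<times> real"
  have h_meas[measurable]: "h \<in> borel_measurable N" unfolding h_def N_def by measurable
  have AEN: "AE \<theta> in N. 0 \<le> snd \<theta>"
    unfolding N_def
  proof (rule PN.AE_pair_measure)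
    show "{\<theta> \<in> space (lborel \<Otimes>\<^sub>M \<rho>). 0 \<le> snd \<theta>} \<in> sets (lborel \<Otimes>\<^sub>M \<rho>)" by measurable
  qed (auto intro: AEt)
  have inner2: "AE \<theta> in N. (\<integral>k. Fc k \<theta> \<partial>lborel) = complex_of_real (h \<theta>)"
    using AEN
  proof eventually_elim
    fix \<theta> :: "real \<times> real" assume t: "0 \<le> snd \<theta>"
    define a where "a = fst \<theta> + snd \<theta> + \<epsilon>"
    have Fc2: "Fc k \<theta> = complex_of_real (indicator {0<..} (fst \<theta>)) *
        (complex_of_real (- (fst k * snd k) * exp (- a * (norm k)\<^sup>2)) * cis (inner k x))" for k
      by (simp add: Fc_def a_def)
    show "(\<integral>k. Fc k \<theta> \<partial>lborel) = complex_of_real (h \<theta>)"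
    proof (cases "fst \<theta> > 0")
      case True
      have a: "a > 0" using True t e by (simp add: a_def)
      have "(\<integral>k. Fc k \<theta> \<partial>lborel) = complex_of_real (indicator {0<..} (fst \<theta>)) *
          (\<integral>k. complex_of_real (- (fst k * snd k) * exp (- a * (norm k)\<^sup>2)) * cis (inner k x) \<partial>lborel)"
        unfolding Fc2 by (rule integral_mult_right_zero)
      also have "\<dots> = complex_of_real (indicator {0<..} (fst \<theta>)) * complex_of_real (pi * fst x * snd x / (4 * a ^ 3) * exp (- (norm x)\<^sup>2 / (4 * a)))"
        by (simp only: gauss2d[OF a])
      also have "\<dots> = complex_of_real (h \<theta>)"
        using True t by (simp add: h_def a_def x_def)
      finally show ?thesis .
    next
      case False
      then show ?thesis by (simp add: Fc_def h_def)
    qed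
  qed
  have hnn: "h \<theta> \<ge> 0" for \<theta>
    using x1 x2 e by (auto simp: h_def split: split_indicator intro!: mult_nonneg_nonneg divide_nonneg_pos)
  define Q where "Q t = indicator {0..} t * Pf (R / (t + \<epsilon>))" for t
  have Q01: "0 \<le> Q t \<and> Q t \<le> 1" for t
  proof (cases "t \<ge> 0")
    case True
    then have "R / (t + \<epsilon>) \<ge> 0" using R e by simp
    then show ?thesis using Pf_bounds True by (simp add: Q_def)
  qed (simp add: Q_def)
  have Qmeas[measurable]: "Q \<in> borel_measurable borel" unfolding Q_def Pf_def by measurable
  have Qint: "integrable \<rho> Q"
  proof (rule finite_measure.integrable_const_bound[OF fin, where B = 1])
    show "AE t in \<rho>. norm (Q t) \<le> 1" using Q01 by (simp add: abs_le_iff)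
  qed simp
  have "(\<integral>\<^sup>+\<theta>. ennreal (h \<theta>) \<partial>N) = (\<integral>\<^sup>+t. \<integral>\<^sup>+\<tau>. ennreal (h (\<tau>, t)) \<partial>lborel \<partial>\<rho>)"
    unfolding N_def by (subst PN.nn_integral_snd[symmetric]) (auto simp: N_def[symmetric])
  also have "\<dots> = (\<integral>\<^sup>+t. ennreal (pi * x1 * x2 / (4 * R\<^sup>2)) * ennreal (Q t) \<partial>\<rho>)"
  proof (rule nn_integral_cong)
    fix t :: real
    show "(\<integral>\<^sup>+\<tau>. ennreal (h (\<tau>, t)) \<partial>lborel) = ennreal (pi * x1 * x2 / (4 * R\<^sup>2)) * ennreal (Q t)"
    proof (cases "t \<ge> 0")
      case True
      define b where "b = t + \<epsilon>"
      have b: "b > 0" using True e by (simp add: b_def)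
      have "(\<integral>\<^sup>+\<tau>. ennreal (h (\<tau>, t)) \<partial>lborel)
          = (\<integral>\<^sup>+\<tau>. ennreal (pi * x1 * x2 / 4) * ennreal (indicator {0<..} \<tau> * (1 / (\<tau> + b) ^ 3 * exp (- R / (\<tau> + b)))) \<partial>lborel)"
      proof (rule nn_integral_cong)
        fix \<tau> :: real
        have aa: "\<tau> + t + \<epsilon> = \<tau> + b" by (simp add: b_def)
        have rr: "- (norm x)\<^sup>2 / (4 * (\<tau> + b)) = - R / (\<tau> + b)" by (simp add: R_def)
        have "h (\<tau>, t) = pi * x1 * x2 / 4 * (indicator {0<..} \<tau> * (1 / (\<tau> + b) ^ 3 * exp (- R / (\<tau> + b))))"
        proof (cases "\<tau> > 0")
          case True2: True
          then have "\<tau> + b > 0" using b by simp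
          then show ?thesis using True True2 unfolding h_def fst_conv snd_conv aa rr by simp
        qed (simp add: h_def)
        then show "ennreal (h (\<tau>, t)) = ennreal (pi * x1 * x2 / 4) * ennreal (indicator {0<..} \<tau> * (1 / (\<tau> + b) ^ 3 * exp (- R / (\<tau> + b))))"
          using x1 x2 b by (simp add: ennreal_mult[symmetric] split: split_indicator)
      qed
      also have "\<dots> = ennreal (pi * x1 * x2 / 4) * ennreal (Pf (R / b) / R\<^sup>2)"
        by (subst nn_integral_cmult) (simp, simp only: tau_int[OF b R])
      also have "\<dots> = ennreal (pi * x1 * x2 / (4 * R\<^sup>2)) * ennreal (Q t)"
      proof -
        have "Pf (R / b) \<ge> 0" using Pf_bounds[of "R / b"] R b by simp
        then show ?thesis using True x1 x2 R
          by (simp add: Q_def b_def ennreal_mult[symmetric] field_simps)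
      qed
      finally show ?thesis .
    next
      case False
      then show ?thesis by (simp add: h_def Q_def)
    qed
  qed
  also have "\<dots> = ennreal (pi * x1 * x2 / (4 * R\<^sup>2)) * (\<integral>\<^sup>+t. ennreal (Q t) \<partial>\<rho>)"
    by (rule nn_integral_cmult) simp
  also have "(\<integral>\<^sup>+t. ennreal (Q t) \<partial>\<rho>) = ennreal (integral\<^sup>L \<rho> Q)"
    by (rule nn_integral_eq_integral[OF Qint]) (simp add: Q01)
  also have "ennreal (pi * x1 * x2 / (4 * R\<^sup>2)) * ennreal (integral\<^sup>L \<rho> Q) = ennreal (pi * x1 * x2 / (4 * R\<^sup>2) * integral\<^sup>L \<rho> Q)"
    by (rule ennreal_mult[symmetric]) (use x1 x2 Q01 in \<open>auto intro!: integral_nonneg_AE\<close>)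
  finally have hnn_eq: "(\<integral>\<^sup>+\<theta>. ennreal (h \<theta>) \<partial>N) = ennreal (pi * x1 * x2 / (4 * R\<^sup>2) * integral\<^sup>L \<rho> Q)" .
  have hint: "integral\<^sup>L N h = pi * x1 * x2 / (4 * R\<^sup>2) * integral\<^sup>L \<rho> (\<lambda>t. indicator {0..} t * Pf (R / (t + \<epsilon>)))"
  proof -
    have "integral\<^sup>L N h = enn2real (\<integral>\<^sup>+\<theta>. ennreal (h \<theta>) \<partial>N)"
      by (rule integral_eq_nn_integral) (auto simp: hnn)
    also have "\<dots> = pi * x1 * x2 / (4 * R\<^sup>2) * integral\<^sup>L \<rho> Q"
      unfolding hnn_eq using x1 x2 Q01 by (auto intro!: integral_nonneg_AE)
    also have "Q = (\<lambda>t. indicator {0..} t * Pf (R / (t + \<epsilon>)))" by (simp add: fun_eq_iff Q_def)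
    finally show ?thesis .
  qed
  have "kernel_eps \<gamma> \<epsilon> x = complex_of_real (1 / (2 * pi)\<^sup>2) * (\<integral>k. (\<integral>\<theta>. Fc k \<theta> \<partial>N) \<partial>lborel)"
    unfolding kernel_eps_def inner1 ..
  also have "(\<integral>k. (\<integral>\<theta>. Fc k \<theta> \<partial>N) \<partial>lborel) = (\<integral>\<theta>. (\<integral>k. Fc k \<theta> \<partial>lborel) \<partial>N)"
    using P2.Fubini_integral[OF Fint] ..
  also have "\<dots> = (\<integral>\<theta>. complex_of_real (h \<theta>) \<partial>N)"
    by (rule integral_cong_AE) (use inner2 in auto)
  also have "\<dots> = complex_of_real (integral\<^sup>L N h)" by simp
  finally have "kernel_eps \<gamma> \<epsilon> x = complex_of_real (1 / (2 * pi)\<^sup>2 * (pi * x1 * x2 / (4 * R\<^sup>2)) * integral\<^sup>L \<rho> (\<lambda>t. indicator {0..} t * Pf (R / (t + \<epsilon>))))"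
    unfolding hint by (simp add: mult.assoc)
  also have "1 / (2 * pi)\<^sup>2 * (pi * x1 * x2 / (4 * R\<^sup>2)) = x1 * x2 / (pi * (norm x) ^ 4)"
  proof -
    have n: "norm x > 0" using x1 by (simp add: x_def zero_prod_def)
    show ?thesis unfolding R_def using n pi_gt_zero by (simp add: field_simps power2_eq_square power4_eq_xxxx)
  qed
  finally show ?thesis by (simp add: x_def R_def)
qed

end



lemma Pf_mono: assumes "0 \<le> a" "a \<le> b" shows "Pf a \<le> Pf b"
proof -
  have "Pf a \<le> Pf b" if "0 \<le> a" "a \<le> b" for a b
  proof (rule DERIV_nonneg_imp_increasing_open[of a b Pf])
    show "\<And>x. a < x \<Longrightarrow> x < b \<Longrightarrow> \<exists>y. (Pf has_real_derivative y) (at x) \<and> 0 \<le> y"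
    proof -
      fix x assume "a < x" "x < b"
      then have "x \<ge> 0" using that by simp
      have "(Pf has_real_derivative x * exp (- x)) (at x)"
        unfolding Pf_def[abs_def] by (auto intro!: derivative_eq_intros simp: algebra_simps)
      then show "\<exists>y. (Pf has_real_derivative y) (at x) \<and> 0 \<le> y" using \<open>x \<ge> 0\<close> by auto
    qed
    show "continuous_on {a..b} Pf" unfolding Pf_def[abs_def] by (intro continuous_intros)
  qed (use that in auto)
  then show ?thesis using assms by (cases "a = b") auto
qed

lemma Pf_lower: assumes w: "w > 0" shows "exp (- 1 / w) / 12 \<le> Pf w"
proof (cases "w \<le> 1")
  case True
  have q: "1 + w + w\<^sup>2 / 2 \<le> exp w" using w by (intro exp_lower_Taylor_quadratic) simp
  have w3: "w ^ 3 \<le> w\<^sup>2" using True w by (simp add: power3_eq_cube power2_eq_square mult_left_le_one_le)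
  have w4: "w ^ 4 \<le> w\<^sup>2"
  proof -
    have "w ^ 4 = w\<^sup>2 * w\<^sup>2" by (simp add: power4_eq_xxxx power2_eq_square)
    also have "\<dots> \<le> w\<^sup>2 * 1" using True w by (intro mult_left_mono) (auto simp: power_le_one)
    finally show ?thesis by simp
  qed
  have "w\<^sup>2 \<le> 1" using True w by (intro power_le_one) auto
  then have pos: "0 < 1 - w\<^sup>2 / 6" by simp
  have "(1 - w\<^sup>2 / 6) * (1 + w + w\<^sup>2 / 2) = 1 + w + w\<^sup>2 / 3 - w ^ 3 / 6 - w ^ 4 / 12"
    by (simp add: algebra_simps power2_eq_square power3_eq_cube power4_eq_xxxx)
  also have "\<dots> \<ge> 1 + w" using w3 w4 zero_le_power2[of w] by linarith
  finally have "1 + w \<le> (1 - w\<^sup>2 / 6) * (1 + w + w\<^sup>2 / 2)" .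
  also have "\<dots> \<le> (1 - w\<^sup>2 / 6) * exp w" using pos q by (intro mult_left_mono) auto
  finally have "(1 + w) * exp (- w) \<le> 1 - w\<^sup>2 / 6" by (simp add: exp_minus field_simps)
  then have P: "w\<^sup>2 / 6 \<le> Pf w" by (simp add: Pf_def)
  have "1 / (2 * w\<^sup>2) \<le> exp (1 / w)"
  proof -
    have "1 + 1 / w + (1 / w)\<^sup>2 / 2 \<le> exp (1 / w)" using w by (intro exp_lower_Taylor_quadratic) simp
    moreover have "1 / (2 * w\<^sup>2) = (1 / w)\<^sup>2 / 2" by (simp add: power_divide)
    moreover have "0 \<le> 1 + 1 / w" using w by simp
    ultimately show ?thesis by linarith
  qed
  then have "exp (- 1 / w) \<le> 2 * w\<^sup>2" using w
    by (simp add: exp_minus field_simps)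
  with P show ?thesis by simp
next
  case False
  have q: "1 + w + w\<^sup>2 / 2 \<le> exp w" using w by (intro exp_lower_Taylor_quadratic) simp
  have "w\<^sup>2 \<ge> w" using False by (simp add: power2_eq_square)
  then have "12 * (1 + w) \<le> 11 * (1 + w + w\<^sup>2 / 2)" using False by simp
  also have "\<dots> \<le> 11 * exp w" using q by simp
  finally have "12 * (1 + w) \<le> 11 * exp w" .
  then have "(1 + w) * exp (- w) \<le> 11 / 12" by (simp add: exp_minus field_simps)
  then have "1 / 12 \<le> Pf w" by (simp add: Pf_def)
  moreover have "exp (- 1 / w) \<le> 1" using w by simp
  ultimately show ?thesis by linarith
qed

lemma log_compare:
  fixes n g :: real assumes n: "n > 0" and g: "g > 0"
  shows "2 powr (- g) * ln (exp 1 + 1 / n) powr (- g) \<le> ln (exp 1 + 2 / n) powr (- g)"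
proof -
  have e1: "1 \<le> exp (1::real)" by simp
  have l1: "1 \<le> ln (exp 1 + 1 / n)"
  proof -
    have "exp 1 \<le> exp 1 + 1 / n" using n by simp
    then show ?thesis by (metis ln_exp ln_le_cancel_iff exp_gt_zero less_le_trans)
  qed
  have "exp 1 + 2 / n \<le> (exp 1 + 1 / n)\<^sup>2"
  proof -
    have a: "exp 1 \<le> exp 1 * exp (1::real)" using e1 by simp
    have b: "2 / n \<le> 2 * exp 1 / n" using e1 n by (simp add: divide_le_eq)
    have c: "0 \<le> (1 / n)\<^sup>2" by simp
    have d: "(exp 1 + 1 / n)\<^sup>2 = exp 1 * exp 1 + 2 * exp 1 / n + (1 / n)\<^sup>2"
      by (simp add: power2_eq_square algebra_simps)
    show ?thesis unfolding d using a b c by linarith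
  qed
  moreover have p1: "0 < exp 1 + 2 / n" using n by (intro add_pos_nonneg) auto
  moreover have p2: "0 < (exp 1 + 1 / n)\<^sup>2" using n by (intro zero_less_power add_pos_nonneg) auto
  ultimately have "ln (exp 1 + 2 / n) \<le> ln ((exp 1 + 1 / n)\<^sup>2)"
    by (subst ln_le_cancel_iff[OF p1 p2])
  also have "\<dots> = 2 * ln (exp 1 + 1 / n)" using n by (simp add: ln_realpow add_pos_nonneg)
  finally have le: "ln (exp 1 + 2 / n) \<le> 2 * ln (exp 1 + 1 / n)" .
  have pos: "0 < ln (exp 1 + 2 / n)"
  proof -
    have "exp 1 \<le> exp 1 + 2 / n" using n by simp
    then have "1 \<le> ln (exp 1 + 2 / n)" by (metis ln_exp ln_le_cancel_iff exp_gt_zero less_le_trans)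
    then show ?thesis by simp
  qed
  have "(2 * ln (exp 1 + 1 / n)) powr (- g) \<le> ln (exp 1 + 2 / n) powr (- g)"
    by (rule powr_mono2'[OF _ pos le]) (use g in simp)
  moreover have "(2 * ln (exp 1 + 1 / n)) powr (- g) = 2 powr (- g) * ln (exp 1 + 1 / n) powr (- g)"
    using l1 by (simp add: powr_mult)
  ultimately show ?thesis by simp
qed

lemma antimono_lim_at_right0:
  fixes f :: "real \<Rightarrow> real"
  assumes mono: "\<And>a b. 0 < a \<Longrightarrow> a \<le> b \<Longrightarrow> f b \<le> f a" and bdd: "\<And>a. 0 < a \<Longrightarrow> f a \<le> B"
  shows "(f \<longlongrightarrow> (SUP a\<in>{0<..}. f a)) (at_right 0)"
proof (rule order_tendstoI)
  have bdd': "bdd_above (f ` {0<..})" using bdd by (auto intro!: bdd_aboveI)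
  fix y assume "y < (SUP a\<in>{0<..}. f a)"
  then obtain a0 where a0: "a0 > 0" "y < f a0"
    using less_cSUP_iff[OF _ bdd', of y] by auto
  show "\<forall>\<^sub>F x in at_right 0. y < f x"
    unfolding eventually_at_right_field
    by (rule exI[of _ a0]) (use a0 mono in \<open>auto intro: less_le_trans\<close>)
next
  have bdd': "bdd_above (f ` {0<..})" using bdd by (auto intro!: bdd_aboveI)
  fix y assume y: "(SUP a\<in>{0<..}. f a) < y"
  have "f x < y" if "x > 0" for x
    using cSUP_upper[OF _ bdd', of x] that y by auto
  then show "\<forall>\<^sub>F x in at_right 0. f x < y"
    unfolding eventually_at_right_field by (intro exI[of _ 1]) auto
qed



context rho_ctx begin

lemma tildeK_bound:
  assumes x1: "x1 > 0" and x2: "x2 > 0"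
  shows "x1 * x2 / (pi * (norm (x1, x2)) ^ 4) * (exp (- 1) / 12) * (2 powr (- \<gamma>) * ln (exp 1 + 1 / norm (x1, x2)) powr (- \<gamma>))
         \<le> tildeK \<gamma> (x1, x2)"
proof -
  define n where "n = norm (x1, x2)"
  have n: "n > 0" using x1 by (simp add: n_def zero_prod_def)
  define R where "R = n\<^sup>2 / 4"
  have R: "R > 0" using n by (simp add: R_def)
  define cst where "cst = x1 * x2 / (pi * n ^ 4)"
  have cst: "cst > 0" using x1 x2 n by (simp add: cst_def)
  define G where "G \<epsilon> = integral\<^sup>L \<rho> (\<lambda>t. indicator {0..} t * Pf (R / (t + \<epsilon>)))" for \<epsilon>
  have Qb: "0 \<le> indicator {0..} t * Pf (R / (t + \<epsilon>)) \<and> indicator {0..} t * Pf (R / (t + \<epsilon>)) \<le> 1" if e: "\<epsilon> > 0" for t \<epsilon>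
  proof (cases "t \<ge> 0")
    case True
    then have "R / (t + \<epsilon>) \<ge> 0" using R e by simp
    then show ?thesis using Pf_bounds True by simp
  qed simp
  have Qint: "integrable \<rho> (\<lambda>t. indicator {0..} t * Pf (R / (t + \<epsilon>)))" if e: "\<epsilon> > 0" for \<epsilon>
  proof (rule finite_measure.integrable_const_bound[OF fin, where B = 1])
    show "AE t in \<rho>. norm (indicator {0..} t * Pf (R / (t + \<epsilon>))) \<le> 1"
      using Qb[OF e] by (simp add: abs_le_iff)
    show "(\<lambda>t. indicator {0..} t * Pf (R / (t + \<epsilon>))) \<in> borel_measurable \<rho>"
      unfolding Pf_def by measurable
  qed
  have Gmono: "G b \<le> G a" if "0 < a" "a \<le> b" for a b
    unfolding G_def
  proof (rule integral_mono[OF Qint Qint])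
    fix t
    show "indicator {0..} t * Pf (R / (t + b)) \<le> indicator {0..} t * Pf (R / (t + a))"
    proof (cases "t \<ge> 0")
      case True
      have "R / (t + b) \<le> R / (t + a)" using that True R by (intro divide_left_mono) auto
      moreover have "0 \<le> R / (t + b)" using that True R by simp
      ultimately show ?thesis using True Pf_mono by simp
    qed simp
  qed (use that in auto)
  have Gbdd: "G a \<le> 1" if "0 < a" for a
  proof -
    interpret prob_space \<rho> by (rule P)
    have "G a \<le> integral\<^sup>L \<rho> (\<lambda>t. 1)"
      unfolding G_def by (rule integral_mono[OF Qint]) (use Qb that in auto)
    also have "\<dots> = 1" by (simp add: prob_space)
    finally show ?thesis .
  qed
  define Ls where "Ls = (SUP a\<in>{0<..}. G a)"
  have limG: "(G \<longlongrightarrow> Ls) (at_right 0)" unfolding Ls_def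
    by (rule antimono_lim_at_right0[OF Gmono Gbdd])
  have kf: "kernel_eps \<gamma> \<epsilon> (x1, x2) = complex_of_real (cst * G \<epsilon>)" if "\<epsilon> > 0" for \<epsilon>
    using kernel_formula[OF that x1 x2] by (simp add: cst_def G_def n_def R_def)
  have "((\<lambda>\<epsilon>. kernel_eps \<gamma> \<epsilon> (x1, x2)) \<longlongrightarrow> complex_of_real (cst * Ls)) (at_right 0)"
  proof (rule Lim_transform_eventually)
    show "((\<lambda>\<epsilon>. complex_of_real (cst * G \<epsilon>)) \<longlongrightarrow> complex_of_real (cst * Ls)) (at_right 0)"
      by (intro tendsto_of_real tendsto_mult_left limG)
    show "\<forall>\<^sub>F \<epsilon> in at_right 0. complex_of_real (cst * G \<epsilon>) = kernel_eps \<gamma> \<epsilon> (x1, x2)"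
      using eventually_at_right_less[of 0] by eventually_elim (simp add: kf)
  qed
  then have "Lim (at_right 0) (\<lambda>\<epsilon>. kernel_eps \<gamma> \<epsilon> (x1, x2)) = complex_of_real (cst * Ls)"
    by (intro tendsto_Lim) simp
  then have tK: "tildeK \<gamma> (x1, x2) = cst * Ls" by (simp add: tildeK_def)
  have GL: "G R \<le> Ls" unfolding Ls_def
    by (rule cSUP_upper) (use R Gbdd in \<open>auto intro!: bdd_aboveI\<close>)
  have EG: "exp (- 1) / 12 * ln (exp 1 + 2 / n) powr (- \<gamma>) \<le> G R"
  proof -
    have r: "2 / n > 0" using n by simp
    have rr: "(2 / n)\<^sup>2 = 1 / R" using n by (simp add: R_def power_divide)
    have iE: "integrable \<rho> (\<lambda>t. exp (- t * (2 / n)\<^sup>2))"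
    proof (rule finite_measure.integrable_const_bound[OF fin, where B = 1])
      show "AE t in \<rho>. norm (exp (- t * (2 / n)\<^sup>2)) \<le> 1" using AEt by eventually_elim simp
    qed simp
    have "exp (- 1) / 12 * ln (exp 1 + 2 / n) powr (- \<gamma>) = exp (- 1) / 12 * integral\<^sup>L \<rho> (\<lambda>t. exp (- t * (2 / n)\<^sup>2))"
      by (simp only: L[OF r])
    also have "\<dots> = integral\<^sup>L \<rho> (\<lambda>t. exp (- 1) / 12 * exp (- t * (2 / n)\<^sup>2))" by simp
    also have "\<dots> \<le> G R"
      unfolding G_def
    proof (rule integral_mono_AE)
      show "integrable \<rho> (\<lambda>t. exp (- 1) / 12 * exp (- t * (2 / n)\<^sup>2))" using iE by simp
      show "integrable \<rho> (\<lambda>t. indicator {0..} t * Pf (R / (t + R)))" by (rule Qint[OF R])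
      show "AE t in \<rho>. exp (- 1) / 12 * exp (- t * (2 / n)\<^sup>2) \<le> indicator {0..} t * Pf (R / (t + R))"
        using AEt
      proof eventually_elim
        fix t :: real assume t: "0 \<le> t"
        have w: "R / (t + R) > 0" using t R by simp
        have "- 1 / (R / (t + R)) = - 1 + - (t * (2 / n)\<^sup>2)"
          using R t unfolding rr by (simp add: field_simps)
        then have "exp (- 1 / (R / (t + R))) = exp (- 1) * exp (- t * (2 / n)\<^sup>2)"
          by (simp add: exp_add[symmetric])
        then show "exp (- 1) / 12 * exp (- t * (2 / n)\<^sup>2) \<le> indicator {0..} t * Pf (R / (t + R))"
          using Pf_lower[OF w] t by simp
      qed
    qed
    finally show ?thesis .
  qed
  have LC: "2 powr (- \<gamma>) * ln (exp 1 + 1 / n) powr (- \<gamma>) \<le> ln (exp 1 + 2 / n) powr (- \<gamma>)"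
    by (rule log_compare[OF n g])
  have "exp (- 1) / 12 * (2 powr (- \<gamma>) * ln (exp 1 + 1 / n) powr (- \<gamma>)) \<le> exp (- 1) / 12 * ln (exp 1 + 2 / n) powr (- \<gamma>)"
    by (rule mult_left_mono[OF LC]) simp
  also note EG
  also note GL
  finally have "exp (- 1) / 12 * (2 powr (- \<gamma>) * ln (exp 1 + 1 / n) powr (- \<gamma>)) \<le> Ls" .
  then have "cst * (exp (- 1) / 12 * (2 powr (- \<gamma>) * ln (exp 1 + 1 / n) powr (- \<gamma>))) \<le> cst * Ls"
    using cst by (intro mult_left_mono) auto
  then have fin: "cst * (exp (- 1) / 12 * (2 powr (- \<gamma>) * ln (exp 1 + 1 / n) powr (- \<gamma>))) \<le> tildeK \<gamma> (x1, x2)"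
    unfolding tK .
  have eq: "x1 * x2 / (pi * (norm (x1, x2)) ^ 4) * (exp (- 1) / 12) * (2 powr (- \<gamma>) * ln (exp 1 + 1 / norm (x1, x2)) powr (- \<gamma>))
      = cst * (exp (- 1) / 12 * (2 powr (- \<gamma>) * ln (exp 1 + 1 / n) powr (- \<gamma>)))"
    by (simp only: cst_def n_def mult.assoc)
  show ?thesis unfolding eq by (rule fin)
qed

end



theorem lemma3p3:
  fixes \<gamma> :: real
  assumes "\<gamma> > 0"
  shows "\<exists>C > 0. \<forall>x1 x2 :: real. x1 > 0 \<longrightarrow> x2 > 0 \<longrightarrow>
           tildeK \<gamma> (x1, x2) \<ge>
             C * x1 * x2 / (norm (x1, x2))^4 * (ln (exp 1 + 1 / norm (x1, x2))) powr (- \<gamma>)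
               * exp (- (norm (x1, x2))\<^sup>2)"
proof -
  obtain \<rho> where \<rho>: "prob_space \<rho>" "sets \<rho> = sets borel" "AE t in \<rho>. 0 \<le> t"
     "\<forall>r>0. integral\<^sup>L \<rho> (\<lambda>t. exp (- t * r\<^sup>2)) = ln (exp 1 + r) powr (- \<gamma>)"
    using rho_exists[OF assms] by blast
  have ctx: "rho_ctx \<gamma> \<rho>"
  proof (rule rho_ctx.intro)
    show "\<gamma> > 0" by (rule assms)
    show "prob_space \<rho>" by (rule \<rho>(1))
    show "sets \<rho> = sets borel" by (rule \<rho>(2))
    show "AE t in \<rho>. 0 \<le> t" by (rule \<rho>(3))
    show "integral\<^sup>L \<rho> (\<lambda>t. exp (- t * r\<^sup>2)) = ln (exp 1 + r) powr (- \<gamma>)" if "r > 0" for r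
      using \<rho>(4) that by blast
  qed
  interpret rho_ctx \<gamma> \<rho> by (rule ctx)
  define C where "C = exp (- 1) / 12 * 2 powr (- \<gamma>) / pi"
  have C: "C > 0" by (simp add: C_def)
  show ?thesis
  proof (intro exI[of _ C] conjI allI impI C)
    fix x1 x2 :: real assume x1: "x1 > 0" and x2: "x2 > 0"
    define n where "n = norm (x1, x2)"
    have n: "n > 0" using x1 by (simp add: n_def zero_prod_def)
    define Lg where "Lg = ln (exp 1 + 1 / n) powr (- \<gamma>)"
    have Lg: "Lg \<ge> 0" by (simp add: Lg_def)
    have A: "0 \<le> C * x1 * x2 / n ^ 4 * Lg" using C x1 x2 n Lg by simp
    have "C * x1 * x2 / n ^ 4 * Lg * exp (- n\<^sup>2) \<le> C * x1 * x2 / n ^ 4 * Lg * 1"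
      using A by (intro mult_left_mono) auto
    also have "\<dots> = x1 * x2 / (pi * n ^ 4) * (exp (- 1) / 12) * (2 powr (- \<gamma>) * Lg)"
      by (simp add: C_def field_simps)
    also have "\<dots> \<le> tildeK \<gamma> (x1, x2)"
      using tildeK_bound[OF x1 x2] unfolding n_def Lg_def .
    finally show "C * x1 * x2 / (norm (x1, x2))^4 * (ln (exp 1 + 1 / norm (x1, x2))) powr (- \<gamma>)
               * exp (- (norm (x1, x2))\<^sup>2) \<le> tildeK \<gamma> (x1, x2)"
      unfolding n_def Lg_def .
  qed
qed


end
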